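(* Let $J, G \in \Gamma_0(\mathbb{R}^n)$ with $\mathrm{ri}(\mathrm{dom}\,J)\cap \mathrm{ri}(\mathrm{dom}\,G)\neq\emptyset$ and such that the set of minimizers of $\min_{x\in\mathbb{R}^n} J(x)+G(x)$ is nonempty. Let $\gamma>0$ and $\lambda_k \in\, ]0,2]$ with $\sum_{k}\lambda_k(2-\lambda_k)=+\infty$, and let $(z^k,x^k,v^k)$ be generated by the Douglas--Rachford scheme \[ v^{k+1} = \mathrm{prox}_{\gamma G}(2x^k - z^k),\quad z^{k+1} = (1-\lambda_k) z^k + \lambda_k (z^k + v^{k+1} - x^k),\quad x^{k+1} = \mathrm{prox}_{\gamma J}(z^{k+1}). \] Then $(z^k,x^k,v^k)$ converges to $(z^\star,x^\star,x^\star)$, where $z^\star$ is a fixed point of $\tfrac12(\mathrm{rprox}_{\gamma G}\circ\mathrm{rprox}_{\gamma J}+\mathrm{Id})$ and $x^\star$ is a global minimizer of $J+G$; write $v^\star \eqdef x^\star$. Assume that $J$ is partly smooth at $x^\star$ relative to a manifold $\mathcal{M}_J$, that $G$ is partly smooth at $v^\star$ relative to a manifold $\mathcal{M}_G$, and that \[ z^\star \in x^\star + \gamma\big(\mathrm{ri}(\partial J(x^\star)) \cap \mathrm{ri}(-\partial G(v^\star))\big). \] Then: (1) for all $k$ sufficiently large, $(x^k,v^k)\in\mathcal{M}_J\times\mathcal{M}_G$; (2) if $G$ is partly smooth at $v^\star$ relative to the affine/linear manifold $v^\star+T^G_{v^\star}$, then for all $k$ sufficiently large $v^k \in v^\star +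 T^G_{v^\star}$ and $T^G_{v^k}=T^G_{v^\star}$; (3) if $J$ is partly smooth at $x^\star$ relative to the affine/linear manifold $x^\star+T^J_{x^\star}$, then for all $k$ sufficiently large $x^k\in x^\star+T^J_{x^\star}$ and $T^J_{x^k}=T^J_{x^\star}$.
   Context: $\Gamma_0(\mathbb{R}^n)$: proper lsc convex functions; $\mathrm{ri}$: relative interior; $\mathrm{prox}_{\gamma F}(z)=\operatorname{argmin}_x \gamma F(x)+\tfrac12\|x-z\|^2$, $\mathrm{rprox}_{\gamma F}=2\mathrm{prox}_{\gamma F}-\mathrm{Id}$. For $F\in\Gamma_0$ and $x$ with $\partial F(x)\ne\emptyset$, $T^F_x \eqdef \mathrm{Lin}(\partial F(x))^\perp$ where $\mathrm{Lin}(C)$ is the subspace parallel to the affine hull of $C$. $F$ is partly smooth at $x$ relative to a set $\mathcal{M}\ni x$ if: (1) $\mathcal{M}$ is a $C^2$-manifold around $x$ and $F|_{\mathcal{M}}$ is $C^2$ near $x$; (2) the tangent space of $\mathcal{M}$ at $x$ equals $T^F_x$; (3) $\partial F$ is continuous at $x$ relative to $\mathcal{M}$. If $\mathcal{M}$ is affine or linear then $\mathcal{M}=x+T^F_x$. *)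

theory Defs
  imports "HOL-Analysis.Analysis"
begin

definition proper_fun :: "('a \<Rightarrow> ereal) \<Rightarrow> bool" where
  "proper_fun F \<longleftrightarrow> (\<forall>x. F x \<noteq> -\<infinity>) \<and> (\<exists>x. F x < \<infinity>)"

definition convex_fun :: "('a::real_vector \<Rightarrow> ereal) \<Rightarrow> bool" where
  "convex_fun F \<longleftrightarrow> convex {(x, t::real). F x \<le> ereal t}"

definition lsc_fun :: "('a::topological_space \<Rightarrow> ereal) \<Rightarrow> bool" where
  "lsc_fun F \<longleftrightarrow> (\<forall>c::real. closed {x. F x \<le> ereal c})"

definition Gamma0 :: "('a::euclidean_space \<Rightarrow> ereal) \<Rightarrow> bool" where
  "Gamma0 F \<longleftrightarrow> proper_fun F \<and> convex_fun F \<and> lsc_fun F"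

definition edom :: "('a \<Rightarrow> ereal) \<Rightarrow> 'a set" where
  "edom F = {x. F x < \<infinity>}"

definition subdiff :: "('a::euclidean_space \<Rightarrow> ereal) \<Rightarrow> 'a \<Rightarrow> 'a set" where
  "subdiff F x = {g. F x < \<infinity> \<and> (\<forall>y. F x + ereal (g \<bullet> (y - x)) \<le> F y)}"

definition prox :: "real \<Rightarrow> ('a::euclidean_space \<Rightarrow> ereal) \<Rightarrow> 'a \<Rightarrow> 'a" where
  "prox \<gamma> F z = (SOME p. \<forall>y. ereal \<gamma> * F p + ereal ((norm (p - z))\<^sup>2 / 2)
                               \<le> ereal \<gamma> * F y + ereal ((norm (y - z))\<^sup>2 / 2))"

definition rprox :: "real \<Rightarrow> ('a::euclidean_space \<Rightarrow> ereal) \<Rightarrow> 'a \<Rightarrow> 'a" where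
  "rprox \<gamma> F z = 2 *\<^sub>R prox \<gamma> F z - z"

text \<open>Lin(C): the subspace parallel to the affine hull of C; T^F_x = Lin(dF(x))^perp.\<close>
definition Lin :: "'a::real_vector set \<Rightarrow> 'a set" where
  "Lin C = span {a - b | a b. a \<in> C \<and> b \<in> C}"

definition Tsp :: "('a::euclidean_space \<Rightarrow> ereal) \<Rightarrow> 'a \<Rightarrow> 'a set" where
  "Tsp F x = orthogonal_comp (Lin (subdiff F x))"

definition C2_on :: "'a::euclidean_space set \<Rightarrow> ('a \<Rightarrow> 'b::euclidean_space) \<Rightarrow> bool" where
  "C2_on U f \<longleftrightarrow> (\<exists>(D :: 'a \<Rightarrow> ('a \<Rightarrow>\<^sub>L 'b)) (D2 :: 'a \<Rightarrow> ('a \<Rightarrow>\<^sub>L ('a \<Rightarrow>\<^sub>L 'b))).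
      (\<forall>y\<in>U. (f has_derivative blinfun_apply (D y)) (at y)) \<and>
      (\<forall>y\<in>U. (D has_derivative blinfun_apply (D2 y)) (at y)) \<and>
      continuous_on U D2)"

text \<open>M is a C^2 manifold around x with tangent space T at x: locally M is the zero set
  of a C^2 submersion Phi (valued in a subspace S, derivative at x onto S); the tangent
  space is the kernel of the derivative at x.\<close>
definition C2_manifold_tangent :: "'a::euclidean_space set \<Rightarrow> 'a \<Rightarrow> 'a set \<Rightarrow> bool" where
  "C2_manifold_tangent M x T \<longleftrightarrow> x \<in> M \<and>
     (\<exists>U S (\<Phi> :: 'a \<Rightarrow> 'a) D. open U \<and> x \<in> U \<and> subspace S \<and> \<Phi> ` U \<subseteq> S \<and> C2_on U \<Phi> \<and>
        (\<Phi> has_derivative D) (at x) \<and> range D = S \<and>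
        M \<inter> U = {y \<in> U. \<Phi> y = 0} \<and> {h. D h = 0} = T)"

text \<open>Continuity (Painleve-Kuratowski) of the subdifferential at x relative to M.\<close>
definition subdiff_continuous_rel :: "('a::euclidean_space \<Rightarrow> ereal) \<Rightarrow> 'a \<Rightarrow> 'a set \<Rightarrow> bool" where
  "subdiff_continuous_rel F x M \<longleftrightarrow>
     (\<forall>y. (\<forall>k. y k \<in> M) \<and> y \<longlonglongrightarrow> x \<longrightarrow>
        (\<forall>g0 \<in> subdiff F x. \<exists>g. (\<forall>\<^sub>F k in sequentially. g k \<in> subdiff F (y k)) \<and> g \<longlonglongrightarrow> g0) \<and>
        (\<forall>r g g0. strict_mono r \<and> (\<forall>k. g k \<in> subdiff F (y (r k))) \<and> g \<longlonglongrightarrow> g0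
                    \<longrightarrow> g0 \<in> subdiff F x))"

definition partly_smooth :: "('a::euclidean_space \<Rightarrow> ereal) \<Rightarrow> 'a \<Rightarrow> 'a set \<Rightarrow> bool" where
  "partly_smooth F x M \<longleftrightarrow>
     C2_manifold_tangent M x (Tsp F x) \<and>
     (\<exists>U (f :: 'a \<Rightarrow> real). open U \<and> x \<in> U \<and> C2_on U f \<and> (\<forall>y \<in> M \<inter> U. F y = ereal (f y))) \<and>
     subdiff_continuous_rel F x M"

end

theory Submission
  imports Defs
begin
lemma G0_nminf: "Gamma0 F \<Longrightarrow> F x \<noteq> -\<infinity>"
  by (auto simp: Gamma0_def proper_fun_def)

lemma G0_dom: "Gamma0 F \<Longrightarrow> \<exists>a. F a < \<infinity>"
  by (auto simp: Gamma0_def proper_fun_def)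

lemma G0_closed: "Gamma0 F \<Longrightarrow> closed {x. F x \<le> ereal c}"
  by (auto simp: Gamma0_def lsc_fun_def)

lemma fin_real: "(a::ereal) \<noteq> -\<infinity> \<Longrightarrow> a < \<infinity> \<Longrightarrow> a = ereal (real_of_ereal a)"
  by (cases a) auto

lemma G0_conv:
  assumes "Gamma0 F" "F x < \<infinity>" "F y < \<infinity>" "0 \<le> t" "t \<le> 1"
  shows "F ((1 - t) *\<^sub>R x + t *\<^sub>R y) \<le> ereal ((1 - t) * real_of_ereal (F x) + t * real_of_ereal (F y))"
proof -
  have c: "convex {(x, t::real). F x \<le> ereal t}" using assms(1) by (auto simp: Gamma0_def convex_fun_def)
  have fx: "F x = ereal (real_of_ereal (F x))" "F y = ereal (real_of_ereal (F y))"
    using fin_real[OF G0_nminf[OF assms(1)]] assms(2,3) by auto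
  have "(x, real_of_ereal (F x)) \<in> {(x, t::real). F x \<le> ereal t}" "(y, real_of_ereal (F y)) \<in> {(x, t::real). F x \<le> ereal t}"
    using fx by auto
  from convexD[OF c this, of "1 - t" t] assms(4,5)
  show ?thesis by (simp add: algebra_simps)
qed

lemma subdiffD:
  assumes "Gamma0 F" "g \<in> subdiff F x"
  shows "F x = ereal (real_of_ereal (F x))" "\<And>y. ereal (real_of_ereal (F x) + g \<bullet> (y - x)) \<le> F y"
proof -
  have "F x < \<infinity>" using assms(2) by (simp add: subdiff_def)
  then show fx: "F x = ereal (real_of_ereal (F x))" using fin_real[OF G0_nminf[OF assms(1)]] by auto
  fix y
  have "F x + ereal (g \<bullet> (y - x)) \<le> F y" using assms by (auto simp: subdiff_def)
  then show "ereal (real_of_ereal (F x) + g \<bullet> (y - x)) \<le> F y" using fx by (metis plus_ereal.simps(1))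
qed

lemma subdiffI:
  assumes "F x = ereal a" "\<And>y. F y < \<infinity> \<Longrightarrow> ereal (a + g \<bullet> (y - x)) \<le> F y"
  shows "g \<in> subdiff F x"
  unfolding subdiff_def using assms
  by (auto, metis ereal_less_eq(1) not_less plus_ereal.simps(1))

lemma subdiff_fin:
  assumes "Gamma0 F" "g \<in> subdiff F x" "F y < \<infinity>"
  shows "real_of_ereal (F x) + g \<bullet> (y - x) \<le> real_of_ereal (F y)"
proof -
  have "F y \<noteq> -\<infinity>" using assms G0_nminf by auto
  then have "F y = ereal (real_of_ereal (F y))" using assms(3) fin_real by auto
  then show ?thesis using subdiffD(2)[OF assms(1,2), of y] by (metis ereal_less_eq(3))
qed

lemma subdiff_mono:
  assumes "Gamma0 F" "g \<in> subdiff F x" "h \<in> subdiff F y"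
  shows "(g - h) \<bullet> (x - y) \<ge> 0"
proof -
  have fx: "F x < \<infinity>" "F y < \<infinity>" using assms by (auto simp: subdiff_def)
  have "real_of_ereal (F x) + g \<bullet> (y - x) \<le> real_of_ereal (F y)"
    "real_of_ereal (F y) + h \<bullet> (x - y) \<le> real_of_ereal (F x)"
    using subdiff_fin assms fx by blast+
  then have "g \<bullet> (y - x) + h \<bullet> (x - y) \<le> 0" by linarith
  moreover have "(g - h) \<bullet> (x - y) = - (g \<bullet> (y - x) + h \<bullet> (x - y))"
    by (simp add: algebra_simps inner_diff_left inner_diff_right)
  ultimately show ?thesis by linarith
qed

lemma lsc_min:
  fixes h :: "'a::heine_borel \<Rightarrow> ereal"
  assumes cl: "\<And>c. closed {x. h x \<le> ereal c}" and K: "compact K" "K \<noteq> {}" and nm: "\<And>x. h x \<noteq> -\<infinity>"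
  shows "\<exists>x\<in>K. \<forall>y\<in>K. h x \<le> h y"
proof (cases "\<forall>y\<in>K. h y = \<infinity>")
  case True then show ?thesis using K by auto
next
  case False
  define \<mu> where "\<mu> = (INF y\<in>K. h y)"
  have mule: "\<And>y. y \<in> K \<Longrightarrow> \<mu> \<le> h y" unfolding \<mu>_def by (simp add: INF_lower)
  obtain y0 where y0: "y0 \<in> K" "h y0 \<noteq> \<infinity>" using False by blast
  have "\<mu> < \<infinity>" using mule[OF y0(1)] y0(2) by (cases \<mu>; cases "h y0"; auto)
  define t where "t n = (if \<mu> = -\<infinity> then - real n else real_of_ereal \<mu> + 1 / (real n + 1))" for n :: nat
  have tmono: "t n \<le> t m" if "m \<le> n" for m n
  proof (cases "\<mu> = -\<infinity>")
    case True then show ?thesis using that by (simp add: t_def)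
  next
    case False
    have "1 / (real n + 1) \<le> 1 / (real m + 1)" using that by (intro divide_left_mono) auto
    then show ?thesis using False by (simp add: t_def)
  qed
  have tgt: "\<mu> < ereal (t n)" for n
    using \<open>\<mu> < \<infinity>\<close> by (cases \<mu>) (auto simp: t_def)
  define S where "S n = K \<inter> {x. h x \<le> ereal (t n)}" for n
  have "\<Inter>(range S) \<noteq> {}"
  proof (rule compact_nest)
    show "compact (S n)" for n unfolding S_def using K cl by (simp add: compact_Int_closed)
    show "S n \<noteq> {}" for n
    proof -
      have "\<exists>y\<in>K. h y < ereal (t n)" using tgt[of n] unfolding \<mu>_def by (simp add: INF_less_iff)
      then show ?thesis unfolding S_def by (auto intro: less_imp_le)
    qed
    show "S n \<subseteq> S m" if "m \<le> n" for m n unfolding S_def using tmono[OF that] by (auto intro: order_trans)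
  qed
  then obtain x where x: "\<And>n. x \<in> S n" by blast
  then have xK: "x \<in> K" by (auto simp: S_def)
  have le: "\<And>n. h x \<le> ereal (t n)" using x by (auto simp: S_def)
  have "h x \<noteq> \<infinity>" using le[of 0] by auto
  then obtain r where hx: "h x = ereal r" using nm[of x] by (cases "h x") auto
  have rle: "r \<le> t n" for n using le[of n] hx by simp
  have "h x \<le> \<mu>"
  proof (cases "\<mu> = -\<infinity>")
    case True
    obtain n :: nat where "- r < real n" using reals_Archimedean2 by blast
    then show ?thesis using rle[of n] True by (simp add: t_def)
  next
    case False
    then obtain m where mr: "\<mu> = ereal m" using \<open>\<mu> < \<infinity>\<close> by (cases \<mu>) auto
    have rle2: "r \<le> m + 1 / (real n + 1)" for n using rle[of n] False mr by (simp add: t_def)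
    have "r \<le> m"
    proof (rule field_le_epsilon)
      fix e :: real assume "0 < e"
      then obtain n :: nat where "1 / of_nat (Suc n) < e" by (rule nat_approx_posE)
      then have "1 / (real n + 1) < e" by (simp add: add.commute)
      then show "r \<le> m + e" using rle2[of n] by linarith
    qed
    then show ?thesis using mr hx by simp
  qed
  then show ?thesis using xK mule by (meson order_trans)
qed

lemma phi_fin: "F y = ereal r \<Longrightarrow> ereal g * F y + ereal q = ereal (g * r + q)"
  by simp

lemma phi_inf: "g > 0 \<Longrightarrow> F y = \<infinity> \<Longrightarrow> ereal g * F y + ereal q = \<infinity>"
  by simp

lemma G0_cases [consumes 1, case_names fin inf]:
  assumes "Gamma0 F"
  obtains (fin) r where "F y = ereal r" | (inf) "F y = \<infinity>"
  using G0_nminf[OF assms, of y] by (cases "F y") auto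

lemma phi_closed:
  fixes F :: "'a::euclidean_space \<Rightarrow> ereal"
  assumes F: "Gamma0 F" and g: "g > 0"
  shows "closed {y. ereal g * F y + ereal ((norm (y - z))\<^sup>2 / 2) \<le> ereal c}"
proof (rule closed_sequential_limits[THEN iffD2], intro allI impI, elim conjE)
  fix yk y
  assume yk: "\<forall>n. yk n \<in> {y. ereal g * F y + ereal ((norm (y - z))\<^sup>2 / 2) \<le> ereal c}" and lim: "yk \<longlonglongrightarrow> y"
  define d where "d y = (c - (norm (y - z))\<^sup>2 / 2) / g" for y
  have Fk: "F (yk n) \<le> ereal (d (yk n))" for n
  proof (cases "F (yk n)")
    case MInf then show ?thesis using G0_nminf[OF F] by auto
  next
    case (real r)
    then have "g * r + (norm (yk n - z))\<^sup>2 / 2 \<le> c" using spec[OF yk, of n] by simp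
    then have "r \<le> d (yk n)" using g unfolding d_def by (simp add: field_simps)
    then show ?thesis using real by simp
  next
    case PInf then show ?thesis using spec[OF yk, of n] g by simp
  qed
  have dlim: "(\<lambda>n. d (yk n)) \<longlonglongrightarrow> d y" unfolding d_def
    by (intro tendsto_intros lim) (use g in auto)
  have "F y \<le> ereal (d y + e)" if e: "e > 0" for e
  proof -
    have ev: "\<forall>\<^sub>F n in sequentially. d (yk n) < d y + e"
      using order_tendstoD(2)[OF dlim, of "d y + e"] e by auto
    have "\<forall>\<^sub>F n in sequentially. yk n \<in> {x. F x \<le> ereal (d y + e)}"
    proof (rule eventually_mono[OF ev])
      fix n assume "d (yk n) < d y + e"
      then have "ereal (d (yk n)) \<le> ereal (d y + e)" by simp
      from order_trans[OF Fk[of n] this] show "yk n \<in> {x. F x \<le> ereal (d y + e)}" by simp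
    qed
    from Lim_in_closed_set[OF G0_closed[OF F] this _ lim] show ?thesis by simp
  qed
  then have "F y \<le> ereal (d y)"
  proof (cases "F y")
    case MInf then show ?thesis using G0_nminf[OF F] by auto
  next
    case (real r)
    then have "r \<le> d y + e" if "e > 0" for e using \<open>\<And>e. e > 0 \<Longrightarrow> F y \<le> ereal (d y + e)\<close>[OF that] by simp
    then have "r \<le> d y" by (rule field_le_epsilon)
    then show ?thesis using real by simp
  next
    case PInf then show ?thesis using \<open>\<And>e. e > 0 \<Longrightarrow> F y \<le> ereal (d y + e)\<close>[of 1] by simp
  qed
  then show "y \<in> {y. ereal g * F y + ereal ((norm (y - z))\<^sup>2 / 2) \<le> ereal c}"
  proof (cases "F y")
    case MInf then show ?thesis using G0_nminf[OF F] by auto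
  next
    case (real r)
    then have "r \<le> d y" using \<open>F y \<le> ereal (d y)\<close> by simp
    then have "g * r + (norm (y - z))\<^sup>2 / 2 \<le> c" using g unfolding d_def by (simp add: field_simps)
    then show ?thesis using real by simp
  next
    case PInf then show ?thesis using \<open>F y \<le> ereal (d y)\<close> by simp
  qed
qed

lemma G0_lower_linear:
  fixes F :: "'a::euclidean_space \<Rightarrow> ereal"
  assumes F: "Gamma0 F" and a: "F a = ereal fa"
  obtains K where "K \<ge> 0" "\<And>y r. F y = ereal r \<Longrightarrow> r \<ge> fa - K * (1 + norm (y - a))"
proof -
  have "\<exists>x\<in>cball a 1. \<forall>y\<in>cball a 1. F x \<le> F y"
    by (rule lsc_min[OF G0_closed[OF F]]) (auto simp: G0_nminf[OF F])
  then obtain x0 where x0: "x0 \<in> cball a 1" "\<And>y. y \<in> cball a 1 \<Longrightarrow> F x0 \<le> F y" by blast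
  have "F x0 \<le> ereal fa" using x0(2)[of a] a by simp
  then obtain L where L: "F x0 = ereal L" using G0_nminf[OF F, of x0] by (cases "F x0") auto
  define K where "K = \<bar>L - fa\<bar>"
  have lo: "r \<ge> L" if "y \<in> cball a 1" "F y = ereal r" for y r using x0(2)[OF that(1)] L that(2) by simp
  show ?thesis
  proof (rule that[of K])
    show "K \<ge> 0" by (simp add: K_def)
    fix y r assume fy: "F y = ereal r"
    show "r \<ge> fa - K * (1 + norm (y - a))"
    proof (cases "norm (y - a) \<le> 1")
      case True
      then have "r \<ge> L" using lo[of y r] fy by (simp add: dist_norm norm_minus_commute)
      moreover have "K * (1 + norm (y - a)) \<ge> K" using K_def by (simp add: mult_le_cancel_left1)
      ultimately show ?thesis unfolding K_def by linarith
    next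
      case False
      define t where "t = norm (y - a)"
      have t1: "t > 1" using False t_def by simp
      define w where "w = (1 - 1/t) *\<^sub>R a + (1/t) *\<^sub>R y"
      have "w - a = (1/t) *\<^sub>R (y - a)" unfolding w_def by (simp add: algebra_simps)
      moreover have "y \<noteq> a" using t1 t_def by auto
      ultimately have "norm (w - a) = 1" using t1 t_def by simp
      then have wc: "w \<in> cball a 1" by (simp add: dist_norm norm_minus_commute)
      have "F w \<le> ereal ((1 - 1/t) * fa + (1/t) * r)"
        using G0_conv[OF F, of a y "1/t"] a fy t1 unfolding w_def by simp
      moreover obtain rw where "F w = ereal rw" using G0_nminf[OF F, of w] calculation by (cases "F w") auto
      ultimately have "L \<le> (1 - 1/t) * fa + (1/t) * r" using lo[OF wc] by force
      then have "t * L \<le> t * ((1 - 1/t) * fa + (1/t) * r)" using t1 by simp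
      also have "\<dots> = (t - 1) * fa + r" using t1 by (simp add: field_simps)
      finally have "r \<ge> fa + t * (L - fa)" by (simp add: algebra_simps)
      moreover have "t * (L - fa) \<ge> - (K * t)" unfolding K_def using t1
        by (metis abs_ge_minus_self minus_diff_eq minus_mult_left mult.commute mult_le_cancel_left_pos
            neg_le_iff_le order.trans zero_less_one le_less_trans order_less_imp_le abs_minus_commute) 
      moreover have "K * t \<le> K * (1 + t)" using K_def by (simp add: mult_left_mono)
      ultimately show ?thesis unfolding t_def by linarith
    qed
  qed
qed


lemma lim0:
  fixes A B :: real
  assumes h: "\<And>t. 0 < t \<Longrightarrow> t \<le> 1 \<Longrightarrow> 0 \<le> A + t * B" and B: "B \<ge> 0"
  shows "0 \<le> A"
proof (rule ccontr)
  assume "\<not> 0 \<le> A"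
  then have A: "A < 0" by simp
  define t where "t = min 1 (- A / (2 * (B + 1)))"
  have "- A / (2 * (B + 1)) > 0" using A B by (intro divide_pos_pos) auto
  then have t0: "t > 0" unfolding t_def by simp
  have t1: "t \<le> 1" unfolding t_def by simp
  have "t \<le> - A / (2 * (B + 1))" unfolding t_def by simp
  then have "t * (B + 1) \<le> - A / 2" using B by (simp add: field_simps)
  moreover have "t * B \<le> t * (B + 1)" using t0 by simp
  ultimately have "A + t * B < 0" using A by linarith
  with h[OF t0 t1] show False by linarith
qed

lemma prox_ex:
  fixes F :: "'a::euclidean_space \<Rightarrow> ereal"
  assumes F: "Gamma0 F" and g: "\<gamma> > 0"
  shows "\<exists>p. \<forall>y. ereal \<gamma> * F p + ereal ((norm (p - z))\<^sup>2 / 2) \<le> ereal \<gamma> * F y + ereal ((norm (y - z))\<^sup>2 / 2)"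
proof -
  obtain a where "F a < \<infinity>" using G0_dom[OF F] by blast
  then obtain fa where a: "F a = ereal fa" using G0_nminf[OF F, of a] by (cases "F a") auto
  obtain K where K: "K \<ge> 0" "\<And>y r. F y = ereal r \<Longrightarrow> r \<ge> fa - K * (1 + norm (y - a))"
    using G0_lower_linear[OF F a] by blast
  define \<phi> where "\<phi> y = ereal \<gamma> * F y + ereal ((norm (y - z))\<^sup>2 / 2)" for y
  define Q where "Q = (norm (a - z))\<^sup>2 / 2 + \<gamma> * K * (1 + norm (z - a))"
  define R where "R = 2 * \<gamma> * K + 2 * \<bar>Q\<bar> + 2"
  have R0: "R \<ge> 0" unfolding R_def using g K by simp
  have nm: "\<phi> y \<noteq> -\<infinity>" for y unfolding \<phi>_def using G0_nminf[OF F, of y] g by (cases "F y") auto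
  have pa: "\<phi> a = ereal (\<gamma> * fa + (norm (a - z))\<^sup>2 / 2)" unfolding \<phi>_def a by simp
  have far: "\<phi> y > \<phi> a" if yR: "norm (y - z) > R" for y
  proof (cases "F y")
    case MInf then show ?thesis using G0_nminf[OF F] by auto
  next
    case PInf then show ?thesis using g pa unfolding \<phi>_def by simp
  next
    case (real r)
    define s where "s = norm (y - z)"
    have "norm (y - a) \<le> s + norm (z - a)" unfolding s_def using norm_triangle_ineq[of "y - z" "z - a"] by simp
    then have "K * (1 + norm (y - a)) \<le> K * (1 + s + norm (z - a))" using K(1) by (simp add: mult_left_mono)
    then have r1: "r \<ge> fa - K * (1 + s + norm (z - a))" using K(2)[OF real] by linarith
    have "\<gamma> * r \<ge> \<gamma> * (fa - K * (1 + s + norm (z - a)))" using r1 g by (simp add: mult_left_mono)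
    then have r2: "\<gamma> * r \<ge> \<gamma> * fa - \<gamma> * K * s - \<gamma> * K * (1 + norm (z - a))" by (simp add: algebra_simps)
    have s1: "s / 2 - \<gamma> * K \<ge> \<bar>Q\<bar> + 1" using yR unfolding s_def R_def by simp
    have s2: "s \<ge> 1" using yR R_def g K unfolding s_def by (smt (verit) mult_nonneg_nonneg)
    have "s * (s / 2 - \<gamma> * K) \<ge> 1 * (\<bar>Q\<bar> + 1)" using s1 s2 by (intro mult_mono) auto
    then have "s\<^sup>2 / 2 - \<gamma> * K * s > Q" by (simp add: power2_eq_square algebra_simps)
    then have "\<gamma> * r + s\<^sup>2 / 2 > \<gamma> * fa + (norm (a - z))\<^sup>2 / 2" using r2 unfolding Q_def by (simp add: algebra_simps)
    then show ?thesis using pa real unfolding \<phi>_def s_def by simp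
  qed
  have "\<exists>x\<in>cball z R. \<forall>y\<in>cball z R. \<phi> x \<le> \<phi> y"
    by (rule lsc_min) (use phi_closed[OF F g] nm R0 in \<open>auto simp: \<phi>_def\<close>)
  then obtain p where p: "p \<in> cball z R" "\<And>y. y \<in> cball z R \<Longrightarrow> \<phi> p \<le> \<phi> y" by blast
  have "a \<in> cball z R" using far[of a] by (force simp: dist_norm norm_minus_commute)
  then have pa: "\<phi> p \<le> \<phi> a" using p(2) by blast
  have "\<phi> p \<le> \<phi> y" for y
  proof (cases "y \<in> cball z R")
    case True then show ?thesis using p by blast
  next
    case False
    then have "norm (y - z) > R" by (simp add: dist_norm norm_minus_commute)
    then show ?thesis using far pa by (meson less_imp_le order_trans)
  qed
  then show ?thesis unfolding \<phi>_def by blast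
qed

lemma prox_min:
  fixes F :: "'a::euclidean_space \<Rightarrow> ereal"
  assumes F: "Gamma0 F" and g: "\<gamma> > 0"
  shows "ereal \<gamma> * F (prox \<gamma> F z) + ereal ((norm (prox \<gamma> F z - z))\<^sup>2 / 2) \<le> ereal \<gamma> * F y + ereal ((norm (y - z))\<^sup>2 / 2)"
  using someI_ex[OF prox_ex[OF F g, of z]] unfolding prox_def by blast

lemma prox_sub:
  fixes F :: "'a::euclidean_space \<Rightarrow> ereal"
  assumes F: "Gamma0 F" and g: "\<gamma> > 0"
  shows "(1 / \<gamma>) *\<^sub>R (z - prox \<gamma> F z) \<in> subdiff F (prox \<gamma> F z)"
proof -
  define p where "p = prox \<gamma> F z"
  have hm: "ereal \<gamma> * F p + ereal ((norm (p - z))\<^sup>2 / 2) \<le> ereal \<gamma> * F y + ereal ((norm (y - z))\<^sup>2 / 2)" for y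
    unfolding p_def by (rule prox_min[OF F g])
  obtain a where "F a < \<infinity>" using G0_dom[OF F] by blast
  then obtain fa where a: "F a = ereal fa" using G0_nminf[OF F, of a] by (cases "F a") auto
  have "F p \<noteq> \<infinity>" using hm[of a] a g by auto
  then obtain fp where fp: "F p = ereal fp" using G0_nminf[OF F, of p] by (cases "F p") auto
  show ?thesis unfolding p_def[symmetric]
  proof (rule subdiffI[where F=F and x=p, OF fp])
    fix y assume "F y < \<infinity>"
    then obtain fy where fy: "F y = ereal fy" using G0_nminf[OF F, of y] by (cases "F y") auto
    define A where "A = \<gamma> * (fy - fp) + (p - z) \<bullet> (y - p)"
    define B where "B = (norm (y - p))\<^sup>2 / 2"
    have Hm: "0 \<le> A + t * B" if t: "0 < t" "t \<le> 1" for t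
    proof -
      define pt where "pt = (1 - t) *\<^sub>R p + t *\<^sub>R y"
      have c: "F pt \<le> ereal ((1 - t) * fp + t * fy)"
        using G0_conv[OF F, of p y t] fp fy t unfolding pt_def by simp
      then obtain rt where rt: "F pt = ereal rt" using G0_nminf[OF F, of pt] by (cases "F pt") auto
      have rtle: "rt \<le> (1 - t) * fp + t * fy" using c rt by simp
      have "\<gamma> * fp + (norm (p - z))\<^sup>2 / 2 \<le> \<gamma> * rt + (norm (pt - z))\<^sup>2 / 2"
        using hm[of pt] fp rt by simp
      moreover have "\<gamma> * rt \<le> \<gamma> * ((1 - t) * fp + t * fy)" using rtle g by simp
      moreover have e: "pt - z = (p - z) + t *\<^sub>R (y - p)" unfolding pt_def by (simp add: algebra_simps)
      have "(norm ((p - z) + t *\<^sub>R (y - p)))\<^sup>2 = (norm (p - z))\<^sup>2 + 2 * t * ((p - z) \<bullet> (y - p)) + t\<^sup>2 * (norm (y - p))\<^sup>2"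
        unfolding power2_norm_eq_inner by (simp add: inner_add_left inner_add_right inner_commute power2_eq_square)
      then have "(norm (pt - z))\<^sup>2 = (norm (p - z))\<^sup>2 + 2 * t * ((p - z) \<bullet> (y - p)) + t\<^sup>2 * (norm (y - p))\<^sup>2"
        unfolding e .
      moreover have "\<gamma> * ((1 - t) * fp + t * fy) = \<gamma> * fp + t * (\<gamma> * (fy - fp))" by (simp add: algebra_simps)
      ultimately have "0 \<le> t * (\<gamma> * (fy - fp)) + t * ((p - z) \<bullet> (y - p)) + t\<^sup>2 * (norm (y - p))\<^sup>2 / 2"
        by linarith
      then have "0 \<le> t * (A + t * B)" unfolding A_def B_def by (simp add: algebra_simps power2_eq_square)
      then show ?thesis using t by (simp add: zero_le_mult_iff)
    qed
    have B0: "0 \<le> B" unfolding B_def by simp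
    have "0 \<le> A" by (rule lim0[OF Hm B0])
    then have "(z - p) \<bullet> (y - p) \<le> \<gamma> * (fy - fp)" unfolding A_def
      by (simp add: inner_diff_left algebra_simps)
    then have "((z - p) \<bullet> (y - p)) / \<gamma> \<le> fy - fp" using g by (simp add: pos_divide_le_eq mult.commute)
    then have "((1 / \<gamma>) *\<^sub>R (z - p)) \<bullet> (y - p) \<le> fy - fp" by simp
    then show "ereal (fp + ((1 / \<gamma>) *\<^sub>R (z - p)) \<bullet> (y - p)) \<le> F y" using fy by simp
  qed
qed

lemma prox_unique:
  fixes F :: "'a::euclidean_space \<Rightarrow> ereal"
  assumes F: "Gamma0 F" and g: "\<gamma> > 0" and p: "(1 / \<gamma>) *\<^sub>R (z - p) \<in> subdiff F p"
  shows "prox \<gamma> F z = p"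
proof -
  define q where "q = prox \<gamma> F z"
  have q: "(1 / \<gamma>) *\<^sub>R (z - q) \<in> subdiff F q" unfolding q_def by (rule prox_sub[OF F g])
  have "((1 / \<gamma>) *\<^sub>R (z - p) - (1 / \<gamma>) *\<^sub>R (z - q)) \<bullet> (p - q) \<ge> 0"
    by (rule subdiff_mono[OF F p q])
  moreover have "(1 / \<gamma>) *\<^sub>R (z - p) - (1 / \<gamma>) *\<^sub>R (z - q) = - (1 / \<gamma>) *\<^sub>R (p - q)"
    by (simp add: algebra_simps)
  ultimately have "- (1 / \<gamma>) * ((p - q) \<bullet> (p - q)) \<ge> 0" by simp
  then have "(p - q) \<bullet> (p - q) \<le> 0" using g by (simp add: divide_le_0_iff)
  then have "(p - q) \<bullet> (p - q) = 0" using inner_ge_zero[of "p - q"] by linarith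
  then show ?thesis unfolding q_def[symmetric] by simp
qed

lemma prox_firm:
  fixes F :: "'a::euclidean_space \<Rightarrow> ereal"
  assumes F: "Gamma0 F" and g: "\<gamma> > 0"
  shows "(norm (prox \<gamma> F z - prox \<gamma> F w))\<^sup>2 \<le> (z - w) \<bullet> (prox \<gamma> F z - prox \<gamma> F w)"
proof -
  define p q where "p = prox \<gamma> F z" "q = prox \<gamma> F w"
  have "((1 / \<gamma>) *\<^sub>R (z - p) - (1 / \<gamma>) *\<^sub>R (w - q)) \<bullet> (p - q) \<ge> 0"
    unfolding p_q_def by (rule subdiff_mono[OF F prox_sub[OF F g] prox_sub[OF F g]])
  moreover have "(1 / \<gamma>) *\<^sub>R (z - p) - (1 / \<gamma>) *\<^sub>R (w - q) = (1 / \<gamma>) *\<^sub>R ((z - w) - (p - q))"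
    by (simp add: algebra_simps)
  ultimately have "(1 / \<gamma>) * (((z - w) - (p - q)) \<bullet> (p - q)) \<ge> 0" by simp
  then have "((z - w) - (p - q)) \<bullet> (p - q) \<ge> 0" using g by (simp add: zero_le_divide_iff)
  then show ?thesis unfolding p_q_def[symmetric] by (simp add: inner_diff_left power2_norm_eq_inner)
qed

lemma prox_nonexp:
  fixes F :: "'a::euclidean_space \<Rightarrow> ereal"
  assumes F: "Gamma0 F" and g: "\<gamma> > 0"
  shows "norm (prox \<gamma> F z - prox \<gamma> F w) \<le> norm (z - w)"
proof -
  define d where "d = prox \<gamma> F z - prox \<gamma> F w"
  have "(norm d)\<^sup>2 \<le> (z - w) \<bullet> d" unfolding d_def by (rule prox_firm[OF F g])
  also have "\<dots> \<le> norm (z - w) * norm d" by (rule norm_cauchy_schwarz)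
  finally have "norm d * norm d \<le> norm (z - w) * norm d" by (simp add: power2_eq_square)
  then show ?thesis unfolding d_def[symmetric]
    by (metis mult_right_le_imp_le norm_ge_zero order_le_less zero_less_norm_iff mult_zero_right)
qed

lemma rprox_nonexp:
  fixes F :: "'a::euclidean_space \<Rightarrow> ereal"
  assumes F: "Gamma0 F" and g: "\<gamma> > 0"
  shows "norm (rprox \<gamma> F z - rprox \<gamma> F w) \<le> norm (z - w)"
proof -
  define d where "d = prox \<gamma> F z - prox \<gamma> F w"
  have f: "(norm d)\<^sup>2 \<le> (z - w) \<bullet> d" unfolding d_def by (rule prox_firm[OF F g])
  have e: "rprox \<gamma> F z - rprox \<gamma> F w = 2 *\<^sub>R d - (z - w)" unfolding rprox_def d_def by (simp add: algebra_simps)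
  have "(norm (2 *\<^sub>R d - (z - w)))\<^sup>2 = 4 * (norm d)\<^sup>2 - 4 * ((z - w) \<bullet> d) + (norm (z - w))\<^sup>2"
    by (simp add: power2_norm_eq_inner inner_diff_left inner_diff_right inner_commute algebra_simps)
  also have "\<dots> \<le> (norm (z - w))\<^sup>2" using f by simp
  finally show ?thesis unfolding e by (simp add: power2_le_iff_abs_le[symmetric] power_mono_iff)
qed

lemma sep_01:
  fixes D :: "'b::euclidean_space set"
  assumes "convex D" "0 \<notin> D"
  obtains w where "\<And>d. d \<in> D \<Longrightarrow> 0 \<le> w \<bullet> d" "\<And>d. d \<in> rel_interior D \<Longrightarrow> 0 < w \<bullet> d"
proof (cases "0 \<in> closure D")
  case True
  have ri: "rel_interior (closure D) = rel_interior D" by (rule convex_rel_interior_closure[OF assms(1)])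
  have "0 \<notin> rel_interior (closure D)" unfolding ri using assms(2) rel_interior_subset by blast
  from supporting_hyperplane_rel_boundary[OF convex_closure[OF assms(1)] True this]
  obtain a where "\<And>y. y \<in> closure D \<Longrightarrow> a \<bullet> 0 \<le> a \<bullet> y" "\<And>y. y \<in> rel_interior (closure D) \<Longrightarrow> a \<bullet> 0 < a \<bullet> y"
    by metis
  then show ?thesis using that[of a] closure_subset ri by auto
next
  case False
  from separating_hyperplane_closed_point[OF convex_closure[OF assms(1)] closed_closure False]
  obtain a b where ab: "a \<bullet> 0 < b" "\<forall>x\<in>closure D. a \<bullet> x > b" by blast
  have pos: "0 < a \<bullet> d" if "d \<in> D" for d
  proof -
    have "d \<in> closure D" using that closure_subset by blast
    then have "a \<bullet> d > b" using ab(2) by blast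
    then show ?thesis using ab(1) by simp
  qed
  show ?thesis
  proof (rule that[of a])
    show "0 \<le> a \<bullet> d" if "d \<in> D" for d using pos[OF that] by simp
    show "0 < a \<bullet> d" if "d \<in> rel_interior D" for d using pos that rel_interior_subset by blast
  qed
qed

lemma edom_convex:
  assumes F: "Gamma0 F" shows "convex (edom F)"
proof (rule convexI)
  fix x y :: 'a and u v :: real
  assume h: "x \<in> edom F" "y \<in> edom F" "0 \<le> u" "0 \<le> v" "u + v = 1"
  then have u: "u = 1 - v" "v \<le> 1" by auto
  have "F x < \<infinity>" "F y < \<infinity>" using h unfolding edom_def by auto
  from G0_conv[OF F this h(4) u(2)]
  have "F ((1 - v) *\<^sub>R x + v *\<^sub>R y) < \<infinity>" by (rule le_less_trans) simp
  then show "u *\<^sub>R x + v *\<^sub>R y \<in> edom F" unfolding edom_def u(1) by simp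
qed

lemma ri_flat:
  fixes S :: "'a::euclidean_space set"
  assumes S: "convex S" and c: "c \<in> rel_interior S" and h: "\<And>x. x \<in> S \<Longrightarrow> 0 \<le> a \<bullet> (x - c)"
    and x: "x \<in> S"
  shows "a \<bullet> x = a \<bullet> c"
proof (cases "x = c")
  case True then show ?thesis by simp
next
  case False
  have "x \<in> affine hull S" by (rule hull_inc[OF x])
  then obtain m where m: "m > 1" "\<And>e. e > 1 \<and> e \<le> m \<Longrightarrow> (1 - e) *\<^sub>R x + e *\<^sub>R c \<in> S"
    using convex_rel_interior_if[OF S c] by blast
  have mem: "(1 - m) *\<^sub>R x + m *\<^sub>R c \<in> S" using m(2)[of m] m(1) by simp
  have "0 \<le> a \<bullet> ((1 - m) *\<^sub>R x + m *\<^sub>R c - c)" by (rule h[OF mem])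
  also have "a \<bullet> ((1 - m) *\<^sub>R x + m *\<^sub>R c - c) = (1 - m) * (a \<bullet> (x - c))"
    by (simp add: algebra_simps inner_diff_right inner_add_right)
  finally have "a \<bullet> (x - c) \<le> 0" using m(1) by (simp add: zero_le_mult_iff)
  with h[OF x] show ?thesis by (simp add: inner_diff_right)
qed

lemma sum_rule_min:
  fixes J G :: "'a::euclidean_space \<Rightarrow> ereal"
  assumes J: "Gamma0 J" and G: "Gamma0 G"
    and ri: "rel_interior (edom J) \<inter> rel_interior (edom G) \<noteq> {}"
    and m: "\<forall>y. J m + G m \<le> J y + G y"
  shows "\<exists>a. a \<in> subdiff J m \<and> - a \<in> subdiff G m"
proof -
  obtain c where c: "c \<in> rel_interior (edom J)" "c \<in> rel_interior (edom G)" using ri by blast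
  then have "J c < \<infinity>" "G c < \<infinity>" using rel_interior_subset unfolding edom_def by blast+
  then obtain Jc Gc where Jc: "J c = ereal Jc" and Gc: "G c = ereal Gc"
    using G0_nminf[OF J, of c] G0_nminf[OF G, of c] by (cases "J c"; cases "G c") auto
  have "J m + G m \<le> ereal (Jc + Gc)" using m[rule_format, of c] Jc Gc by simp
  then obtain Jm Gm where Jm: "J m = ereal Jm" and Gm: "G m = ereal Gm"
    using G0_nminf[OF J, of m] G0_nminf[OF G, of m] by (cases "J m"; cases "G m") auto
  define C1 where "C1 = {(x, s). J x \<le> ereal (s + Jm)}"
  define C2 where "C2 = {(x, s). G x < ereal (Gm - s)}"
  define D where "D = (\<Union>u\<in>C1. \<Union>v\<in>C2. {u - v})"
  have cC1: "convex C1" unfolding convex_alt C1_def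
  proof (clarsimp)
    fix x1 s1 x2 s2 and u :: real
    assume h: "J x1 \<le> ereal (s1 + Jm)" "J x2 \<le> ereal (s2 + Jm)" "0 \<le> u" "u \<le> 1"
    obtain r1 r2 where r: "J x1 = ereal r1" "J x2 = ereal r2"
      using h G0_nminf[OF J, of x1] G0_nminf[OF J, of x2] by (cases "J x1"; cases "J x2") auto
    have "J ((1 - u) *\<^sub>R x1 + u *\<^sub>R x2) \<le> ereal ((1 - u) * r1 + u * r2)"
      using G0_conv[OF J, of x1 x2 u] r h by simp
    also have "(1 - u) * r1 + u * r2 \<le> (1 - u) * (s1 + Jm) + u * (s2 + Jm)"
      using h r by (intro add_mono mult_left_mono) auto
    finally show "J ((1 - u) *\<^sub>R x1 + u *\<^sub>R x2) \<le> ereal ((1 - u) * s1 + u * s2 + Jm)"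
      by (simp add: algebra_simps)
  qed
  have cC2: "convex C2" unfolding convex_alt C2_def
  proof (clarsimp)
    fix x1 s1 x2 s2 and u :: real
    assume h: "G x1 < ereal (Gm - s1)" "G x2 < ereal (Gm - s2)" "0 \<le> u" "u \<le> 1"
    obtain r1 r2 where r: "G x1 = ereal r1" "G x2 = ereal r2"
      using h G0_nminf[OF G, of x1] G0_nminf[OF G, of x2] by (cases "G x1"; cases "G x2") auto
    have "G ((1 - u) *\<^sub>R x1 + u *\<^sub>R x2) \<le> ereal ((1 - u) * r1 + u * r2)"
      using G0_conv[OF G, of x1 x2 u] r h by simp
    also have "(1 - u) * r1 + u * r2 < (1 - u) * (Gm - s1) + u * (Gm - s2)"
    proof -
      have "r1 < Gm - s1" "r2 < Gm - s2" using h r by auto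
      show ?thesis
      proof (cases "u = 0")
        case True then show ?thesis using \<open>r1 < Gm - s1\<close> by simp
      next
        case False
        then have "u * r2 < u * (Gm - s2)" using h(3) \<open>r2 < Gm - s2\<close> by simp
        moreover have "(1 - u) * r1 \<le> (1 - u) * (Gm - s1)" using h(4) \<open>r1 < Gm - s1\<close> by (intro mult_left_mono) auto
        ultimately show ?thesis by linarith
      qed
    qed
    finally show "G ((1 - u) *\<^sub>R x1 + u *\<^sub>R x2) < ereal (Gm - ((1 - u) * s1 + u * s2))"
      by (simp add: algebra_simps)
  qed
  have cD: "convex D" unfolding D_def by (rule convex_differences[OF cC1 cC2])
  have D0: "0 \<notin> D"
  proof
    assume "0 \<in> D"
    then obtain x s1 s2 where "(x, s1) \<in> C1" "(x, s2) \<in> C2" "s1 = s2" unfolding D_def by auto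
    then have h: "J x \<le> ereal (s1 + Jm)" "G x < ereal (Gm - s1)" unfolding C1_def C2_def by auto
    obtain r1 r2 where r: "J x = ereal r1" "G x = ereal r2"
      using h G0_nminf[OF J, of x] G0_nminf[OF G, of x] by (cases "J x"; cases "G x") auto
    have "J m + G m \<le> J x + G x" using m by blast
    then have "Jm + Gm \<le> r1 + r2" using Jm Gm r by simp
    moreover have "r1 \<le> s1 + Jm" "r2 < Gm - s1" using h r by auto
    ultimately show False by linarith
  qed
  have "(m, 0) \<in> C1" "(m, -1) \<in> C2" unfolding C1_def C2_def using Jm Gm by auto
  then have "(0, 1) \<in> D" unfolding D_def by force
  then have Dne: "D \<noteq> {}" by blast
  obtain w where w: "\<And>d. d \<in> D \<Longrightarrow> 0 \<le> w \<bullet> d" "\<And>d. d \<in> rel_interior D \<Longrightarrow> 0 < w \<bullet> d"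
    using sep_01[OF cD D0] by blast
  obtain a \<alpha> where wa: "w = (a, \<alpha>)" by (cases w)
  have H: "0 \<le> a \<bullet> (x1 - x2) + \<alpha> * (s1 - s2)"
    if "J x1 \<le> ereal (s1 + Jm)" "G x2 < ereal (Gm - s2)" for x1 s1 x2 s2
  proof -
    have "(x1, s1) - (x2, s2) \<in> D" unfolding D_def C1_def C2_def using that by blast
    from w(1)[OF this] show ?thesis by (simp add: wa)
  qed
  have al: "\<alpha> \<ge> 0" using H[of m 0 m "-1"] Jm Gm by simp
  show ?thesis
  proof (cases "\<alpha> = 0")
    case True
    have dJ: "0 \<le> a \<bullet> (x - c)" if "x \<in> edom J" for x
    proof -
      have "J x < \<infinity>" using that by (simp add: edom_def)
      then obtain r where r: "J x = ereal r" using G0_nminf[OF J, of x] by (cases "J x") auto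
      show ?thesis using H[of x "r - Jm" c "Gm - Gc - 1"] r Gc True by simp
    qed
    have dG: "0 \<le> a \<bullet> (c - x)" if "x \<in> edom G" for x
    proof -
      have "G x < \<infinity>" using that by (simp add: edom_def)
      then obtain r where r: "G x = ereal r" using G0_nminf[OF G, of x] by (cases "G x") auto
      show ?thesis using H[of c "Jc - Jm" x "Gm - r - 1"] r Jc True by simp
    qed
    have fJ: "a \<bullet> x = a \<bullet> c" if "x \<in> edom J" for x
      by (rule ri_flat[OF edom_convex[OF J] c(1) dJ that])
    have fG: "(-a) \<bullet> x = (-a) \<bullet> c" if "x \<in> edom G" for x
      by (rule ri_flat[OF edom_convex[OF G] c(2) _ that]) (use dG in \<open>simp add: inner_diff_right\<close>)
    have "w \<bullet> d = 0" if "d \<in> D" for d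
    proof -
      from that obtain x1 s1 x2 s2 where d: "d = (x1, s1) - (x2, s2)" "(x1, s1) \<in> C1" "(x2, s2) \<in> C2"
        unfolding D_def by auto
      have "x1 \<in> edom J" using d(2) unfolding C1_def edom_def by (auto intro: le_less_trans)
      moreover have "x2 \<in> edom G" using d(3) unfolding C2_def edom_def by (auto intro: less_trans)
      ultimately show ?thesis using fJ fG d(1) True by (simp add: wa inner_diff_right)
    qed
    moreover obtain d where "d \<in> rel_interior D" using rel_interior_eq_empty[OF cD] Dne by blast
    ultimately have False using w(2) rel_interior_subset by (metis less_irrefl subsetD)
    then show ?thesis ..
  next
    case False
    then have ap: "\<alpha> > 0" using al by simp
    define g where "g = - (1 / \<alpha>) *\<^sub>R a"
    have gJ: "g \<in> subdiff J m"
    proof (rule subdiffI[where F=J and x=m, OF Jm])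
      fix y assume "J y < \<infinity>"
      then obtain r where r: "J y = ereal r" using G0_nminf[OF J, of y] by (cases "J y") auto
      have "0 \<le> a \<bullet> (y - m) + \<alpha> * (r - Jm)"
      proof (rule field_le_epsilon)
        fix e :: real assume e: "e > 0"
        have "0 \<le> a \<bullet> (y - m) + \<alpha> * ((r - Jm) - (- (e / \<alpha>)))"
          using H[of y "r - Jm" m "- (e / \<alpha>)"] r Gm e ap by simp
        then show "0 \<le> a \<bullet> (y - m) + \<alpha> * (r - Jm) + e" using ap by (simp add: algebra_simps)
      qed
      then have "- (a \<bullet> (y - m)) \<le> (r - Jm) * \<alpha>" by (simp add: mult.commute)
      then have "- (a \<bullet> (y - m)) / \<alpha> \<le> r - Jm" by (rule pos_divide_le_eq[OF ap, THEN iffD2])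
      then show "ereal (Jm + g \<bullet> (y - m)) \<le> J y" unfolding g_def r by simp
    qed
    have gG: "- g \<in> subdiff G m"
    proof (rule subdiffI[where F=G and x=m, OF Gm])
      fix y assume "G y < \<infinity>"
      then obtain r where r: "G y = ereal r" using G0_nminf[OF G, of y] by (cases "G y") auto
      have "0 \<le> a \<bullet> (m - y) + \<alpha> * (r - Gm)"
      proof (rule field_le_epsilon)
        fix e :: real assume e: "e > 0"
        have "0 \<le> a \<bullet> (m - y) + \<alpha> * (0 - (Gm - r - e / \<alpha>))"
          using H[of m 0 y "Gm - r - e / \<alpha>"] r Jm e ap by simp
        then show "0 \<le> a \<bullet> (m - y) + \<alpha> * (r - Gm) + e" using ap by (simp add: algebra_simps)
      qed
      then have "a \<bullet> (y - m) \<le> (r - Gm) * \<alpha>" by (simp add: mult.commute inner_diff_right)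
      then have "(a \<bullet> (y - m)) / \<alpha> \<le> r - Gm" by (rule pos_divide_le_eq[OF ap, THEN iffD2])
      then show "ereal (Gm + (- g) \<bullet> (y - m)) \<le> G y" unfolding g_def r by simp
    qed
    show ?thesis using gJ gG by blast
  qed
qed

lemma norm_comb:
  fixes a b :: "'a::real_inner"
  shows "(norm ((1 - m) *\<^sub>R a + m *\<^sub>R b))\<^sup>2 = (1 - m) * (norm a)\<^sup>2 + m * (norm b)\<^sup>2 - m * (1 - m) * (norm (a - b))\<^sup>2"
  unfolding power2_norm_eq_inner
  by (simp add: inner_add_left inner_add_right inner_diff_left inner_diff_right inner_commute algebra_simps)

lemma KM:
  fixes R :: "'a::euclidean_space \<Rightarrow> 'a" and z :: "nat \<Rightarrow> 'a" and mu :: "nat \<Rightarrow> real"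
  assumes ne: "\<And>a b. norm (R a - R b) \<le> norm (a - b)"
    and fx: "R p = p"
    and mu: "\<And>k. 0 < mu k" "\<And>k. mu k \<le> 1"
    and musum: "filterlim (\<lambda>n. \<Sum>k<n. mu k * (1 - mu k)) at_top sequentially"
    and it: "\<And>k. z (Suc k) = z k + mu k *\<^sub>R (R (z k) - z k)"
  shows "\<exists>zs. z \<longlonglongrightarrow> zs \<and> R zs = zs"
proof -
  have it2: "z (Suc k) - q = (1 - mu k) *\<^sub>R (z k - q) + mu k *\<^sub>R (R (z k) - q)" for k q
    using it[of k] by (simp add: algebra_simps)
  have fej: "(norm (z (Suc k) - q))\<^sup>2 \<le> (norm (z k - q))\<^sup>2 - mu k * (1 - mu k) * (norm (R (z k) - z k))\<^sup>2"
    if q: "R q = q" for k q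
  proof -
    have "(norm (z (Suc k) - q))\<^sup>2 = (1 - mu k) * (norm (z k - q))\<^sup>2 + mu k * (norm (R (z k) - q))\<^sup>2
        - mu k * (1 - mu k) * (norm ((z k - q) - (R (z k) - q)))\<^sup>2"
      unfolding it2 by (rule norm_comb)
    moreover have "norm (R (z k) - q) \<le> norm (z k - q)" using ne[of "z k" q] q by simp
    then have "(norm (R (z k) - q))\<^sup>2 \<le> (norm (z k - q))\<^sup>2" by (simp add: power_mono)
    then have "mu k * (norm (R (z k) - q))\<^sup>2 \<le> mu k * (norm (z k - q))\<^sup>2" using mu(1)[of k] by simp
    moreover have "norm ((z k - q) - (R (z k) - q)) = norm (R (z k) - z k)" by (simp add: norm_minus_commute)
    ultimately show ?thesis by (simp add: algebra_simps)
  qed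
  have dec: "norm (z (Suc k) - q) \<le> norm (z k - q)" if q: "R q = q" for k q
  proof -
    have "mu k * (1 - mu k) * (norm (R (z k) - z k))\<^sup>2 \<ge> 0" using mu[of k] by simp
    then have "(norm (z (Suc k) - q))\<^sup>2 \<le> (norm (z k - q))\<^sup>2" using fej[OF q, of k] by linarith
    then show ?thesis by (simp add: power2_le_iff_abs_le[symmetric] power_mono_iff)
  qed
  define e where "e k = norm (R (z k) - z k)" for k
  have edec: "e (Suc k) \<le> e k" for k
  proof -
    have "R (z (Suc k)) - z (Suc k) = (R (z (Suc k)) - R (z k)) + (1 - mu k) *\<^sub>R (R (z k) - z k)"
      using it[of k] by (simp add: algebra_simps)
    then have "e (Suc k) \<le> norm (R (z (Suc k)) - R (z k)) + norm ((1 - mu k) *\<^sub>R (R (z k) - z k))"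
      unfolding e_def by (metis norm_triangle_ineq)
    also have "norm (R (z (Suc k)) - R (z k)) \<le> norm (z (Suc k) - z k)" by (rule ne)
    also have "norm (z (Suc k) - z k) = mu k * e k" using it[of k] mu[of k] unfolding e_def by simp
    also have "norm ((1 - mu k) *\<^sub>R (R (z k) - z k)) = (1 - mu k) * e k" using mu[of k] unfolding e_def by simp
    finally show ?thesis by (simp add: algebra_simps)
  qed
  then have edecs: "decseq e" by (rule decseq_SucI)
  have tele: "(\<Sum>k<n. mu k * (1 - mu k) * (e k)\<^sup>2) \<le> (norm (z 0 - p))\<^sup>2 - (norm (z n - p))\<^sup>2" for n
  proof (induction n)
    case 0 then show ?case by simp
  next
    case (Suc n)
    have "(norm (z (Suc n) - p))\<^sup>2 \<le> (norm (z n - p))\<^sup>2 - mu n * (1 - mu n) * (e n)\<^sup>2"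
      using fej[OF fx, of n] unfolding e_def .
    then show ?case using Suc by simp
  qed
  have e0: "e \<longlonglongrightarrow> 0"
  proof (rule LIMSEQ_I)
    fix r :: real assume r: "r > 0"
    have "\<exists>N. e N < r"
    proof (rule ccontr)
      assume "\<not> (\<exists>N. e N < r)"
      then have ge: "e k \<ge> r" for k by (simp add: not_less)
      have "\<forall>\<^sub>F n in sequentially. (norm (z 0 - p))\<^sup>2 / r\<^sup>2 + 1 \<le> (\<Sum>k<n. mu k * (1 - mu k))"
        using musum unfolding filterlim_at_top by blast
      then obtain n where n: "(norm (z 0 - p))\<^sup>2 / r\<^sup>2 + 1 \<le> (\<Sum>k<n. mu k * (1 - mu k))"
        by (auto simp: eventually_sequentially)
      have "(\<Sum>k<n. mu k * (1 - mu k)) * r\<^sup>2 = (\<Sum>k<n. mu k * (1 - mu k) * r\<^sup>2)" by (simp add: sum_distrib_right)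
      also have "\<dots> \<le> (\<Sum>k<n. mu k * (1 - mu k) * (e k)\<^sup>2)"
      proof (rule sum_mono)
        fix k assume "k \<in> {..<n}"
        have "r\<^sup>2 \<le> (e k)\<^sup>2" using ge[of k] r by (simp add: power_mono)
        moreover have "mu k * (1 - mu k) \<ge> 0" using mu[of k] by simp
        ultimately show "mu k * (1 - mu k) * r\<^sup>2 \<le> mu k * (1 - mu k) * (e k)\<^sup>2" by (simp add: mult_left_mono)
      qed
      also have "\<dots> \<le> (norm (z 0 - p))\<^sup>2" using tele[of n] zero_le_power2[of "norm (z n - p)"] by linarith
      finally have A: "(\<Sum>k<n. mu k * (1 - mu k)) * r\<^sup>2 \<le> (norm (z 0 - p))\<^sup>2" .
      have "((norm (z 0 - p))\<^sup>2 / r\<^sup>2 + 1) * r\<^sup>2 \<le> (\<Sum>k<n. mu k * (1 - mu k)) * r\<^sup>2"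
        using n r by (simp add: mult_right_mono)
      also have "((norm (z 0 - p))\<^sup>2 / r\<^sup>2 + 1) * r\<^sup>2 = (norm (z 0 - p))\<^sup>2 + r\<^sup>2" using r by (simp add: field_simps)
      finally show False using A r by (smt (verit) zero_less_power)
    qed
    then obtain N where N: "e N < r" by blast
    show "\<exists>no. \<forall>n\<ge>no. norm (e n - 0) < r"
    proof (intro exI allI impI)
      fix n assume "N \<le> n"
      then have "e n \<le> e N" using decseqD[OF edecs] by blast
      then show "norm (e n - 0) < r" using N by (simp add: e_def)
    qed
  qed
  have bd: "bounded (range z)"
  proof -
    have "norm (z k - p) \<le> norm (z 0 - p)" for k
    proof (induction k)
      case 0 then show ?case by simp
    next
      case (Suc k) then show ?case using dec[OF fx, of k] by linarith
    qed
    then have "norm (z k) \<le> norm p + norm (z 0 - p)" for k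
      using norm_triangle_sub[of "z k" p] by (smt (verit))
    then show ?thesis unfolding bounded_iff by blast
  qed
  obtain zs r where r: "strict_mono r" "(z \<circ> r) \<longlonglongrightarrow> zs"
    using bounded_imp_convergent_subsequence[OF bd] by (elim exE conjE)
  have Rlim: "(\<lambda>k. R (z (r k))) \<longlonglongrightarrow> R zs"
  proof -
    have "(\<lambda>k. z (r k)) \<longlonglongrightarrow> zs" using r(2) by (simp add: o_def)
    then have "(\<lambda>k. z (r k) - zs) \<longlonglongrightarrow> 0" by (rule LIM_zero)
    then have n0: "(\<lambda>k. norm (z (r k) - zs)) \<longlonglongrightarrow> 0" by (rule tendsto_norm_zero)
    have "(\<lambda>k. R (z (r k)) - R zs) \<longlonglongrightarrow> 0"
      by (rule Lim_null_comparison[OF _ n0]) (simp add: ne)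
    then show ?thesis by (rule LIM_zero_cancel)
  qed
  have "(\<lambda>k. R (z (r k)) - z (r k)) \<longlonglongrightarrow> 0"
  proof -
    have "(\<lambda>k. e (r k)) \<longlonglongrightarrow> 0" using LIMSEQ_subseq_LIMSEQ[OF e0 r(1)] by (simp add: o_def)
    then show ?thesis unfolding e_def by (simp add: tendsto_norm_zero_iff)
  qed
  moreover have "(\<lambda>k. R (z (r k)) - z (r k)) \<longlonglongrightarrow> R zs - zs"
    using Rlim r(2) by (intro tendsto_diff) (auto simp: o_def)
  ultimately have fzs: "R zs = zs" using LIMSEQ_unique by fastforce
  have "z \<longlonglongrightarrow> zs"
  proof (rule LIMSEQ_I)
    fix eps :: real assume eps: "eps > 0"
    obtain K where K: "\<And>k. k \<ge> K \<Longrightarrow> norm ((z \<circ> r) k - zs) < eps" using LIMSEQ_D[OF r(2) eps] by blast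
    have dz: "decseq (\<lambda>k. norm (z k - zs))" by (rule decseq_SucI) (rule dec[OF fzs])
    show "\<exists>no. \<forall>n\<ge>no. norm (z n - zs) < eps"
    proof (intro exI allI impI)
      fix n assume "r K \<le> n"
      then have "norm (z n - zs) \<le> norm (z (r K) - zs)" using decseqD[OF dz] by blast
      then show "norm (z n - zs) < eps" using K[of K] by simp
    qed
  qed
  then show ?thesis using fzs by blast
qed

lemma proj_M:
  fixes xs :: "'a::euclidean_space" and V :: "'a set"
  assumes CM: "C2_manifold_tangent M xs (orthogonal_comp V)" and V: "subspace V"
  obtains \<delta> C where "\<delta> > 0" "C \<ge> 0"
    "\<And>y. norm (y - xs) < \<delta> \<Longrightarrow> \<exists>n\<in>V. norm n \<le> C * norm (y - xs) \<and> y + n \<in> M"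
proof -
  have xM: "xs \<in> M" using CM by (simp add: C2_manifold_tangent_def)
  have ex: "\<exists>U S (\<Phi> :: 'a \<Rightarrow> 'a) D. open U \<and> xs \<in> U \<and> subspace S \<and> \<Phi> ` U \<subseteq> S \<and> C2_on U \<Phi> \<and>
        (\<Phi> has_derivative D) (at xs) \<and> range D = S \<and>
        M \<inter> U = {y \<in> U. \<Phi> y = 0} \<and> {h. D h = 0} = orthogonal_comp V"
    using CM unfolding C2_manifold_tangent_def by (elim conjE)
  from ex obtain U S and \<Phi> D :: "'a \<Rightarrow> 'a" where
    all: "open U \<and> xs \<in> U \<and> subspace S \<and> \<Phi> ` U \<subseteq> S \<and> C2_on U \<Phi> \<and>
        (\<Phi> has_derivative D) (at xs) \<and> range D = S \<and>
        M \<inter> U = {y \<in> U. \<Phi> y = 0} \<and> {h. D h = 0} = orthogonal_comp V"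
    by blast
  then have U: "open U" "xs \<in> U" and S: "subspace S" "\<Phi> ` U \<subseteq> S"
    and C2: "C2_on U \<Phi>" and dD: "(\<Phi> has_derivative D) (at xs)" and rD: "range D = S"
    and MU: "M \<inter> U = {y \<in> U. \<Phi> y = 0}" and ker: "{h. D h = 0} = orthogonal_comp V"
    by auto
  have P0: "\<Phi> xs = 0" using xM U MU by blast
  have linD: "linear D" using dD by (rule has_derivative_linear)
  have contU: "continuous_on U \<Phi>"
  proof -
    obtain D1 :: "'a \<Rightarrow> 'a \<Rightarrow>\<^sub>L 'a" where "\<forall>y\<in>U. (\<Phi> has_derivative blinfun_apply (D1 y)) (at y)"
      using C2 unfolding C2_on_def by blast
    then show ?thesis by (intro continuous_at_imp_continuous_on) (blast intro: has_derivative_continuous)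
  qed
  have spV: "span V = V" using V by (simp add: span_eq_iff)
  have kerV: "D h = 0 \<longleftrightarrow> h \<in> orthogonal_comp V" for h using ker by blast
  have "inj_on D (span V)"
  proof (rule inj_onI)
    fix a b assume ab: "a \<in> span V" "b \<in> span V" "D a = D b"
    then have "D (a - b) = 0" using linD by (simp add: linear_diff)
    then have "a - b \<in> orthogonal_comp V" using kerV by blast
    moreover have "a - b \<in> V" using ab spV V by (simp add: subspace_diff)
    ultimately have "orthogonal (a - b) (a - b)" unfolding orthogonal_comp_def by blast
    then show "a = b" by (simp add: orthogonal_def)
  qed
  from linear_inj_on_left_inverse[OF linD this] obtain g where
    g: "range g \<subseteq> V" "linear g" "\<And>x. x \<in> V \<Longrightarrow> g (D x) = x" using spV by auto
  obtain B where B: "B > 0" "\<And>x. norm (g x) \<le> B * norm x" using linear_bounded_pos[OF g(2)] by blast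
  obtain BD where BD: "BD > 0" "\<And>x. norm (D x) \<le> BD * norm x" using linear_bounded_pos[OF linD] by blast
  define C where "C = 2 * (B * BD + 1)"
  have C0: "C > 0" unfolding C_def using B BD by (simp add: add_pos_nonneg)
  obtain d where d: "d > 0" "\<And>w. norm (w - xs) < d \<Longrightarrow> norm (\<Phi> w - \<Phi> xs - D (w - xs)) \<le> (1 / (4 * B)) * norm (w - xs)"
    using dD[unfolded has_derivative_at_alt] B(1) by (metis divide_pos_pos mult_pos_pos zero_less_numeral zero_less_one)
  obtain d2 where d2: "d2 > 0" "ball xs d2 \<subseteq> U" using U openE by blast
  define \<delta> where "\<delta> = min d d2 / (C + 1)"
  have \<delta>0: "\<delta> > 0" unfolding \<delta>_def using d d2 C0 by simp
  show ?thesis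
  proof (rule that[OF \<delta>0 less_imp_le[OF C0]])
    fix y assume y: "norm (y - xs) < \<delta>"
    define \<rho> where "\<rho> = norm (y - xs)"
    define r where "r = C * \<rho>"
    define K where "K = cball 0 r \<inter> V"
    define f where "f n = n - g (\<Phi> (y + n))" for n
    have rho0: "\<rho> \<ge> 0" unfolding \<rho>_def by simp
    have near: "norm (y + n - xs) < min d d2" if "n \<in> K" for n
    proof -
      have "norm n \<le> r" using that unfolding K_def by simp
      then have "norm (y + n - xs) \<le> \<rho> + r" unfolding \<rho>_def using norm_triangle_ineq[of "y - xs" n]
        by (simp add: algebra_simps)
      also have "\<rho> + r = (C + 1) * \<rho>" unfolding r_def by (simp add: algebra_simps)
      also have "\<dots> < (C + 1) * \<delta>" using y C0 unfolding \<rho>_def by simp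
      also have "\<dots> = min d d2" unfolding \<delta>_def using C0 by simp
      finally show ?thesis .
    qed
    have inU: "y + n \<in> U" if "n \<in> K" for n
      using near[OF that] d2(2) by (auto simp: dist_norm norm_minus_commute)
    have cK: "compact K" unfolding K_def using V by (simp add: compact_Int_closed closed_subspace)
    have cvK: "convex K" unfolding K_def using V by (simp add: convex_Int subspace_imp_convex)
    have "r \<ge> 0" unfolding r_def using C0 rho0 by simp
    then have "0 \<in> K" unfolding K_def using subspace_0[OF V] by simp
    then have neK: "K \<noteq> {}" by blast
    have contf: "continuous_on K f"
    proof -
      have c1: "continuous_on K (\<lambda>n. \<Phi> (y + n))"
        by (rule continuous_on_compose2[OF contU]) (auto intro!: continuous_intros inU)
      have c2: "continuous_on UNIV g" using g(2) by (simp add: linear_continuous_on linear_linear)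
      have "continuous_on K (\<lambda>n. g (\<Phi> (y + n)))"
        by (rule continuous_on_compose2[OF c2 c1]) auto
      then show ?thesis unfolding f_def by (intro continuous_intros)
    qed
    have fK: "f \<in> K \<rightarrow> K"
    proof
      fix n assume n: "n \<in> K"
      have nV: "n \<in> V" using n K_def by simp
      have fV: "f n \<in> V" unfolding f_def using nV g(1) V by (auto intro: subspace_diff)
      define Rm where "Rm = \<Phi> (y + n) - D (y + n - xs)"
      have Rm: "norm Rm \<le> (1 / (4 * B)) * norm (y + n - xs)"
        using d(2)[of "y + n"] near[OF n] P0 unfolding Rm_def by simp
      have "\<Phi> (y + n) = D (y - xs) + D n + Rm" unfolding Rm_def using linD
        by (simp add: linear_add[symmetric] algebra_simps)
      then have "g (\<Phi> (y + n)) = g (D (y - xs)) + n + g Rm" using g(2) g(3)[OF nV] by (simp add: linear_add)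
      then have fe: "f n = - (g (D (y - xs)) + g Rm)" unfolding f_def by simp
      have "norm (f n) \<le> norm (g (D (y - xs))) + norm (g Rm)" unfolding fe norm_minus_cancel by (rule norm_triangle_ineq)
      also have "norm (g (D (y - xs))) \<le> B * (BD * \<rho>)"
        using B(2)[of "D (y - xs)"] BD(2)[of "y - xs"] B(1) unfolding \<rho>_def
        by (meson mult_left_mono order_trans less_imp_le)
      also have "norm (g Rm) \<le> B * ((1 / (4 * B)) * norm (y + n - xs))"
        using B(2)[of Rm] Rm B(1) by (meson mult_left_mono order_trans less_imp_le)
      also have "B * ((1 / (4 * B)) * norm (y + n - xs)) = norm (y + n - xs) / 4" using B(1) by simp
      also have "norm (y + n - xs) \<le> \<rho> + r"
      proof -
        have "norm n \<le> r" using n unfolding K_def by simp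
        then show ?thesis unfolding \<rho>_def using norm_triangle_ineq[of "y - xs" n] by (simp add: algebra_simps)
      qed
      finally have "norm (f n) \<le> B * (BD * \<rho>) + (\<rho> + r) / 4" by simp
      also have "\<dots> \<le> r" unfolding r_def C_def using rho0 B BD by (simp add: algebra_simps)
      finally show "f n \<in> K" unfolding K_def using fV by simp
    qed
    obtain n where n: "n \<in> K" "f n = n" using brouwer[OF cK cvK neK contf fK] by blast
    then have g0: "g (\<Phi> (y + n)) = 0" unfolding f_def by simp
    have "\<Phi> (y + n) \<in> S" using S(2) inU[OF n(1)] by blast
    then obtain w where w: "\<Phi> (y + n) = D w" using rD by blast
    obtain w1 w2 where w12: "w1 \<in> span V" "\<And>v. v \<in> span V \<Longrightarrow> orthogonal w2 v" "w = w1 + w2"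
      using orthogonal_subspace_decomp_exists by blast
    have "w2 \<in> orthogonal_comp V" unfolding orthogonal_comp_def using w12(2) spV
      by (auto simp: orthogonal_commute)
    then have "D w2 = 0" using kerV by blast
    then have Dw: "D w = D w1" using w12(3) linD by (simp add: linear_add)
    have w1V: "w1 \<in> V" using w12(1) spV by simp
    have "w1 = 0" using g0 w Dw g(3)[OF w1V] by simp
    then have "\<Phi> (y + n) = 0" using w Dw linD by (simp add: linear_0)
    then have "y + n \<in> M" using MU inU[OF n(1)] by blast
    moreover have "norm n \<le> C * norm (y - xs)" using n(1) unfolding K_def r_def \<rho>_def by simp
    moreover have "n \<in> V" using n(1) unfolding K_def by simp
    ultimately show "\<exists>n\<in>V. norm n \<le> C * norm (y - xs) \<and> y + n \<in> M" by blast
  qed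
qed

lemma Lin_subspace: "subspace (Lin C)" unfolding Lin_def by (rule subspace_span)

lemma Lin_affine:
  fixes C :: "'a::euclidean_space set"
  assumes gb: "gb \<in> C" and v: "v \<in> Lin C"
  shows "gb + v \<in> affine hull C"
proof -
  define T where "T = (\<lambda>x. - gb + x) ` (C - {gb})"
  have "{a - b |a b. a \<in> C \<and> b \<in> C} \<subseteq> span T"
  proof clarify
    fix a b assume ab: "a \<in> C" "b \<in> C"
    have mem: "- gb + x \<in> span T" if "x \<in> C" for x
    proof (cases "x = gb")
      case True then show ?thesis by (simp add: span_0)
    next
      case False then show ?thesis using that unfolding T_def by (intro span_base) auto
    qed
    have "a - b = (- gb + a) - (- gb + b)" by simp
    then show "a - b \<in> span T" using mem[OF ab(1)] mem[OF ab(2)] by (metis span_diff)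
  qed
  then have "Lin C \<subseteq> span T" unfolding Lin_def by (rule span_minimal) (rule subspace_span)
  then have "gb + v \<in> (\<lambda>x. gb + x) ` span T" using v by blast
  then show ?thesis using affine_hull_span2[OF gb] unfolding T_def by simp
qed

lemma ri_Lin:
  fixes C :: "'a::euclidean_space set"
  assumes gb: "gb \<in> rel_interior C"
  obtains c where "c > 0" "\<And>v. v \<in> Lin C \<Longrightarrow> norm v \<le> c \<Longrightarrow> gb + v \<in> C"
proof -
  obtain e where e: "e > 0" "ball gb e \<inter> affine hull C \<subseteq> C" "gb \<in> C"
    using gb unfolding mem_rel_interior_ball by blast
  show ?thesis
  proof (rule that[of "e / 2"])
    show "e / 2 > 0" using e by simp
    fix v assume v: "v \<in> Lin C" "norm v \<le> e / 2"
    have "gb + v \<in> ball gb e" using v e by (simp add: dist_norm)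
    moreover have "gb + v \<in> affine hull C" by (rule Lin_affine[OF e(3) v(1)])
    ultimately show "gb + v \<in> C" using e(2) by blast
  qed
qed

lemma sub_fin: "Gamma0 F \<Longrightarrow> g \<in> subdiff F x \<Longrightarrow> F x < \<infinity>"
  by (simp add: subdiff_def)

lemma ident:
  fixes F :: "'a::euclidean_space \<Rightarrow> ereal"
  assumes F: "Gamma0 F" and ps: "partly_smooth F xs M"
    and gb: "gb \<in> rel_interior (subdiff F xs)"
    and ylim: "y \<longlonglongrightarrow> xs" and glim: "gk \<longlonglongrightarrow> gb"
    and gsub: "\<forall>\<^sub>F k in sequentially. gk k \<in> subdiff F (y k)"
  shows "\<forall>\<^sub>F k in sequentially. y k \<in> M"
proof (rule ccontr)
  assume nev: "\<not> (\<forall>\<^sub>F k in sequentially. y k \<in> M)"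
  define V where "V = Lin (subdiff F xs)"
  have V: "subspace V" unfolding V_def by (rule Lin_subspace)
  have CM: "C2_manifold_tangent M xs (orthogonal_comp V)"
    using ps unfolding partly_smooth_def Tsp_def V_def by blast
  have cont: "subdiff_continuous_rel F xs M" using ps unfolding partly_smooth_def by blast
  have xM: "xs \<in> M" using CM unfolding C2_manifold_tangent_def by blast
  obtain \<delta> C where dC: "\<delta> > 0" "C \<ge> 0"
    "\<And>y. norm (y - xs) < \<delta> \<Longrightarrow> \<exists>n\<in>V. norm n \<le> C * norm (y - xs) \<and> y + n \<in> M"
    using proj_M[OF CM V] by blast
  define n where "n k = (SOME n. n \<in> V \<and> norm n \<le> C * norm (y k - xs) \<and> y k + n \<in> M)" for k
  have nP: "n k \<in> V \<and> norm (n k) \<le> C * norm (y k - xs) \<and> y k + n k \<in> M" if "norm (y k - xs) < \<delta>" for k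
  proof -
    have "\<exists>n. n \<in> V \<and> norm n \<le> C * norm (y k - xs) \<and> y k + n \<in> M" using dC(3)[OF that] by blast
    from someI_ex[OF this] show ?thesis unfolding n_def .
  qed
  define p where "p k = (if norm (y k - xs) < \<delta> then y k + n k else xs)" for k
  have pM: "p k \<in> M" for k using nP xM unfolding p_def by auto
  have evd: "\<forall>\<^sub>F k in sequentially. norm (y k - xs) < \<delta>"
    using tendstoD[OF ylim dC(1)] by (simp add: dist_norm)
  have plim: "p \<longlonglongrightarrow> xs"
  proof -
    have "(\<lambda>k. y k - xs) \<longlonglongrightarrow> 0" using ylim by (rule LIM_zero)
    then have "(\<lambda>k. norm (y k - xs)) \<longlonglongrightarrow> 0" by (rule tendsto_norm_zero)
    then have b0: "(\<lambda>k. (1 + C) * norm (y k - xs)) \<longlonglongrightarrow> 0" by (rule tendsto_mult_right_zero)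
    have "\<forall>\<^sub>F k in sequentially. norm (p k - xs) \<le> (1 + C) * norm (y k - xs)"
    proof (rule eventually_mono[OF evd])
      fix k assume k: "norm (y k - xs) < \<delta>"
      then have "p k - xs = (y k - xs) + n k" unfolding p_def by simp
      then have "norm (p k - xs) \<le> norm (y k - xs) + norm (n k)" by (metis norm_triangle_ineq)
      then show "norm (p k - xs) \<le> (1 + C) * norm (y k - xs)" using nP[OF k] by (simp add: algebra_simps)
    qed
    from Lim_null_comparison[OF this b0] show ?thesis by (rule LIM_zero_cancel)
  qed
  define Q where "Q k = (norm (y k - xs) < \<delta> \<and> gk k \<in> subdiff F (y k))" for k
  have evQ: "\<forall>\<^sub>F k in sequentially. Q k" unfolding Q_def using evd gsub by (rule eventually_conj)
  have "\<not> (\<forall>\<^sub>F k in sequentially. Q k \<longrightarrow> y k \<in> M)"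
    by (rule not_eventually_impI[OF evQ nev])
  then obtain r :: "nat \<Rightarrow> nat" where r: "strict_mono r" "\<And>k. Q (r k) \<and> y (r k) \<notin> M"
    using not_eventually_sequentiallyD by force
  define d where "d k = y (r k) - p (r k)" for k
  have dV: "d k \<in> V" for k
  proof -
    have "norm (y (r k) - xs) < \<delta>" using r(2)[of k] unfolding Q_def by blast
    then have "d k = - n (r k)" "n (r k) \<in> V" unfolding d_def p_def using nP by auto
    then show ?thesis using V by (simp add: subspace_neg)
  qed
  have dnz: "d k \<noteq> 0" for k using r(2)[of k] pM[of "r k"] unfolding d_def by auto
  define u where "u k = (1 / norm (d k)) *\<^sub>R d k" for k
  have uS: "u k \<in> sphere 0 1 \<inter> V" for k
    using dnz[of k] dV[of k] V unfolding u_def by (auto simp: subspace_scale)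
  have "compact (sphere (0::'a) 1 \<inter> V)" using V by (simp add: compact_Int_closed closed_subspace)
  then obtain l s where ls: "l \<in> sphere 0 1 \<inter> V" "strict_mono s" "(u \<circ> s) \<longlonglongrightarrow> l"
    using compact_imp_seq_compact seq_compactE uS by metis
  obtain c where c: "c > 0" "\<And>v. v \<in> V \<Longrightarrow> norm v \<le> c \<Longrightarrow> gb + v \<in> subdiff F xs"
    using ri_Lin[OF gb] unfolding V_def by blast
  have g0: "gb + c *\<^sub>R l \<in> subdiff F xs"
    using c ls(1) V by (auto intro!: c(2) simp: subspace_scale)
  define q where "q k = p (r (s k))" for k
  have qM: "\<forall>k. q k \<in> M" unfolding q_def using pM by blast
  have qlim: "q \<longlonglongrightarrow> xs"
  proof -
    have "strict_mono (r \<circ> s)" using r(1) ls(2) by (rule strict_mono_o)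
    from LIMSEQ_subseq_LIMSEQ[OF plim this] show ?thesis unfolding q_def by (simp add: o_def)
  qed
  obtain h where h: "\<forall>\<^sub>F k in sequentially. h k \<in> subdiff F (q k)" "h \<longlonglongrightarrow> gb + c *\<^sub>R l"
    using cont qM qlim g0 unfolding subdiff_continuous_rel_def by blast
  have gglim: "(\<lambda>k. gk (r (s k))) \<longlonglongrightarrow> gb"
  proof -
    have "strict_mono (r \<circ> s)" using r(1) ls(2) by (rule strict_mono_o)
    from LIMSEQ_subseq_LIMSEQ[OF glim this] show ?thesis by (simp add: o_def)
  qed
  have ulim: "(\<lambda>k. u (s k)) \<longlonglongrightarrow> l" using ls(3) by (simp add: o_def)
  have "(\<lambda>k. (h k - gk (r (s k))) \<bullet> u (s k)) \<longlonglongrightarrow> ((gb + c *\<^sub>R l) - gb) \<bullet> l"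
    by (intro tendsto_intros h(2) gglim ulim)
  moreover have "((gb + c *\<^sub>R l) - gb) \<bullet> l = c" using ls(1) by (simp add: inner_commute dot_square_norm)
  ultimately have ev1: "\<forall>\<^sub>F k in sequentially. (h k - gk (r (s k))) \<bullet> u (s k) > c / 2"
    using c(1) by (intro order_tendstoD(1)) auto
  have ev2: "\<forall>\<^sub>F k in sequentially. (h k - gk (r (s k))) \<bullet> u (s k) \<le> 0"
  proof (rule eventually_mono[OF h(1)])
    fix k assume hk: "h k \<in> subdiff F (q k)"
    define yy where "yy = y (r (s k))"
    have gk: "gk (r (s k)) \<in> subdiff F yy" using r(2)[of "s k"] unfolding Q_def yy_def by blast
    have fy: "F yy < \<infinity>" using gk by (simp add: subdiff_def)
    have fq: "F (q k) < \<infinity>" using hk by (simp add: subdiff_def)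
    have "real_of_ereal (F (q k)) + h k \<bullet> (yy - q k) \<le> real_of_ereal (F yy)" by (rule subdiff_fin[OF F hk fy])
    moreover have "real_of_ereal (F yy) + gk (r (s k)) \<bullet> (q k - yy) \<le> real_of_ereal (F (q k))"
      by (rule subdiff_fin[OF F gk fq])
    ultimately have "(h k - gk (r (s k))) \<bullet> (yy - q k) \<le> 0"
      by (simp add: inner_diff_left inner_diff_right algebra_simps)
    moreover have "yy - q k = d (s k)" unfolding yy_def q_def d_def by simp
    ultimately have "(h k - gk (r (s k))) \<bullet> d (s k) \<le> 0" by simp
    then show "(h k - gk (r (s k))) \<bullet> u (s k) \<le> 0" unfolding u_def
      by (simp add: divide_nonpos_nonneg mult_nonneg_nonpos)
  qed
  have "\<forall>\<^sub>F k in sequentially. False"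
    by (rule eventually_mono[OF eventually_conj[OF ev1 ev2]]) (use c(1) in linarith)
  then show False by simp
qed

lemma eps_zero:
  fixes X K :: real
  assumes h: "\<And>e. e > 0 \<Longrightarrow> \<bar>X\<bar> \<le> e * K" and K: "K \<ge> 0"
  shows "X = 0"
proof (rule ccontr)
  assume "X \<noteq> 0"
  then have X: "\<bar>X\<bar> > 0" by simp
  define e where "e = \<bar>X\<bar> / (2 * (K + 1))"
  have e: "e > 0" unfolding e_def using X K by simp
  have "e * K \<le> e * (K + 1)" using e by simp
  also have "e * (K + 1) = \<bar>X\<bar> / 2" unfolding e_def using K by (simp add: field_simps)
  finally have "e * K < \<bar>X\<bar>" using X by linarith
  with h[OF e] show False by linarith
qed

lemma orth_span:
  fixes h :: "'a::euclidean_space"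
  assumes "\<And>w. w \<in> G \<Longrightarrow> w \<bullet> h = 0" and "w \<in> span G"
  shows "w \<bullet> h = 0"
proof -
  have "G \<subseteq> orthogonal_comp {h}" using assms(1) by (auto simp: orthogonal_comp_def orthogonal_def inner_commute)
  then have "span G \<subseteq> orthogonal_comp {h}" by (rule span_minimal) (rule subspace_orthogonal_comp)
  then show ?thesis using assms(2) by (auto simp: orthogonal_comp_def orthogonal_def inner_commute)
qed

lemma tang:
  fixes F :: "'a::euclidean_space \<Rightarrow> ereal"
  assumes F: "Gamma0 F" and ps: "partly_smooth F xs M"
    and Maff: "M = (+) xs ` Tsp F xs"
    and ylim: "y \<longlonglongrightarrow> xs" and yM: "\<forall>\<^sub>F k in sequentially. y k \<in> M"
  shows "\<forall>\<^sub>F k in sequentially. Tsp F (y k) = Tsp F xs"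
proof -
  define V where "V = Lin (subdiff F xs)"
  define T where "T = Tsp F xs"
  have TV: "T = orthogonal_comp V" unfolding T_def V_def Tsp_def ..
  have V: "subspace V" unfolding V_def by (rule Lin_subspace)
  have T: "subspace T" unfolding TV by (rule subspace_orthogonal_comp)
  have cont: "subdiff_continuous_rel F xs M" using ps unfolding partly_smooth_def by blast
  obtain U and f :: "'a \<Rightarrow> real" where Uf: "open U" "xs \<in> U" "C2_on U f" "\<And>y. y \<in> M \<inter> U \<Longrightarrow> F y = ereal (f y)"
    using ps unfolding partly_smooth_def by blast
  obtain Df :: "'a \<Rightarrow> 'a \<Rightarrow>\<^sub>L real" where Df: "\<And>y. y \<in> U \<Longrightarrow> (f has_derivative blinfun_apply (Df y)) (at y)"
    using Uf(3) unfolding C2_on_def by blast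
  have evU: "\<forall>\<^sub>F k in sequentially. y k \<in> U" by (rule topological_tendstoD[OF ylim Uf(1,2)])
  have A1: "g \<bullet> h = blinfun_apply (Df yy) h"
    if yy: "yy \<in> M" "yy \<in> U" and g: "g \<in> subdiff F yy" and h: "h \<in> T" for yy g h
  proof -
    define D where "D = blinfun_apply (Df yy)"
    have linD: "linear D" unfolding D_def by (rule has_derivative_linear[OF Df[OF yy(2)]])
    obtain \<tau> where \<tau>: "\<tau> \<in> T" "yy = xs + \<tau>" using yy(1) Maff unfolding T_def by blast
    have inM: "yy + t *\<^sub>R h \<in> M" for t
    proof -
      have "\<tau> + t *\<^sub>R h \<in> T" using \<tau>(1) h T by (simp add: subspace_add subspace_scale)
      then show ?thesis using \<tau>(2) Maff unfolding T_def by (simp add: add.assoc)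
    qed
    obtain \<rho> where \<rho>: "\<rho> > 0" "ball yy \<rho> \<subseteq> U" using Uf(1) yy(2) openE by blast
    have Fyy: "F yy = ereal (f yy)" using Uf(4) yy by blast
    have key: "\<bar>g \<bullet> h - D h\<bar> \<le> e * norm h" if e: "e > 0" for e
    proof -
      obtain d where d: "d > 0" "\<And>z. norm (z - yy) < d \<Longrightarrow> norm (f z - f yy - D (z - yy)) \<le> e * norm (z - yy)"
        using Df[OF yy(2)] e unfolding has_derivative_at_alt D_def by blast
      define t where "t = min d \<rho> / (2 * (norm h + 1))"
      have hpos: "2 * (norm h + 1) > 0" using norm_ge_zero[of h] by (smt (verit))
      then have t: "t > 0" unfolding t_def using d(1) \<rho>(1) by (intro divide_pos_pos) auto
      have th: "t * norm h < min d \<rho>"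
      proof -
        have "t * norm h \<le> t * (norm h + 1)" using t by simp
        also have "t * (norm h + 1) = min d \<rho> / 2" unfolding t_def using hpos by (simp add: field_simps)
        finally show ?thesis using d \<rho> by simp
      qed
      have side: "\<sigma> * (g \<bullet> h) \<le> \<sigma> * D h + e * (t * norm h)" if \<sigma>: "\<bar>\<sigma>\<bar> = t" for \<sigma>
      proof -
        define z where "z = yy + \<sigma> *\<^sub>R h"
        have nz: "norm (z - yy) = t * norm h" unfolding z_def using \<sigma> by simp
        have zU: "z \<in> U" using nz th \<rho>(2) by (auto simp: dist_norm norm_minus_commute)
        have zM: "z \<in> M" unfolding z_def by (rule inM)
        have Fz: "F z = ereal (f z)" using Uf(4) zU zM by blast
        have "real_of_ereal (F yy) + g \<bullet> (z - yy) \<le> real_of_ereal (F z)"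
          by (rule subdiff_fin[OF F g]) (simp add: Fz)
        then have s1: "f yy + \<sigma> * (g \<bullet> h) \<le> f z" using Fyy Fz unfolding z_def by simp
        have "norm (f z - f yy - D (z - yy)) \<le> e * (t * norm h)" using d(2)[of z] nz th by simp
        moreover have "D (z - yy) = \<sigma> * D h" unfolding z_def using linD by (simp add: linear_scale)
        ultimately have "f z - f yy - \<sigma> * D h \<le> e * (t * norm h)" by simp
        with s1 show ?thesis by linarith
      qed
      have p: "t * (g \<bullet> h) \<le> t * D h + e * (t * norm h)" using side[of t] t by simp
      have m: "(- t) * (g \<bullet> h) \<le> (- t) * D h + e * (t * norm h)" using side[of "- t"] t by simp
      have "g \<bullet> h - D h \<le> e * norm h"
      proof -
        have "t * (g \<bullet> h - D h) \<le> t * (e * norm h)" using p by (simp add: algebra_simps)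
        then show ?thesis using t by simp
      qed
      moreover have "D h - g \<bullet> h \<le> e * norm h"
      proof -
        have "t * (D h - g \<bullet> h) \<le> t * (e * norm h)" using m by (simp add: algebra_simps)
        then show ?thesis using t by simp
      qed
      ultimately show ?thesis by (simp add: abs_le_iff)
    qed
    have "g \<bullet> h - D h = 0" by (rule eps_zero[OF key]) simp_all
    then show ?thesis unfolding D_def by simp
  qed
  have A: "T \<subseteq> Tsp F yy" if yy: "yy \<in> M" "yy \<in> U" for yy
  proof
    fix h assume h: "h \<in> T"
    have gen: "w \<bullet> h = 0" if "w \<in> {a - b |a b. a \<in> subdiff F yy \<and> b \<in> subdiff F yy}" for w
      using that A1[OF yy _ h] by (auto simp: inner_diff_left)
    have "w \<bullet> h = 0" if "w \<in> Lin (subdiff F yy)" for w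
      using orth_span[OF gen] that unfolding Lin_def by blast
    then show "h \<in> Tsp F yy" unfolding Tsp_def orthogonal_comp_def orthogonal_def by blast
  qed
  have evA: "\<forall>\<^sub>F k in sequentially. T \<subseteq> Tsp F (y k)"
    using eventually_conj[OF yM evU] by (rule eventually_mono) (use A in blast)
  have evB: "\<forall>\<^sub>F k in sequentially. Tsp F (y k) \<subseteq> T"
  proof (rule ccontr)
    assume nev: "\<not> (\<forall>\<^sub>F k in sequentially. Tsp F (y k) \<subseteq> T)"
    define Q where "Q k = (y k \<in> M \<and> y k \<in> U)" for k
    have evQ: "\<forall>\<^sub>F k in sequentially. Q k" unfolding Q_def by (rule eventually_conj[OF yM evU])
    have "\<not> (\<forall>\<^sub>F k in sequentially. Q k \<longrightarrow> Tsp F (y k) \<subseteq> T)"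
      by (rule not_eventually_impI[OF evQ nev])
    then obtain r :: "nat \<Rightarrow> nat" where r: "strict_mono r" "\<And>k. Q (r k) \<and> \<not> Tsp F (y (r k)) \<subseteq> T"
      using not_eventually_sequentiallyD by force
    have exa: "\<exists>a. a \<in> V \<and> a \<in> Tsp F (y (r k)) \<and> a \<noteq> 0" for k
    proof -
      obtain w where w: "w \<in> Tsp F (y (r k))" "w \<notin> T" using r(2)[of k] by blast
      obtain a b where ab: "a \<in> span V" "\<And>v. v \<in> span V \<Longrightarrow> orthogonal b v" "w = a + b"
        using orthogonal_subspace_decomp_exists by blast
      have aV: "a \<in> V" using ab(1) V by (simp add: span_eq_iff[THEN iffD2])
      have bT: "b \<in> T" unfolding TV orthogonal_comp_def using ab(2) V
        by (auto simp: span_eq_iff[THEN iffD2] orthogonal_commute)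
      have sub: "subspace (Tsp F (y (r k)))" unfolding Tsp_def by (rule subspace_orthogonal_comp)
      have "b \<in> Tsp F (y (r k))" using A[of "y (r k)"] r(2)[of k] bT unfolding Q_def by blast
      then have "a \<in> Tsp F (y (r k))" using w(1) ab(3) sub by (metis add_diff_cancel_right' subspace_diff)
      moreover have "a \<noteq> 0" using w(2) bT ab(3) by auto
      ultimately show ?thesis using aV by blast
    qed
    define a where "a k = (SOME a. a \<in> V \<and> a \<in> Tsp F (y (r k)) \<and> a \<noteq> 0)" for k
    have aP: "a k \<in> V \<and> a k \<in> Tsp F (y (r k)) \<and> a k \<noteq> 0" for k
      unfolding a_def by (rule someI_ex[OF exa])
    define u where "u k = (1 / norm (a k)) *\<^sub>R a k" for k
    have uS: "u k \<in> sphere 0 1 \<inter> V" for k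
      using aP[of k] V unfolding u_def by (auto simp: subspace_scale)
    have uT: "u k \<in> Tsp F (y (r k))" for k
      using aP[of k] unfolding u_def Tsp_def by (simp add: subspace_scale[OF subspace_orthogonal_comp])
    have "compact (sphere (0::'a) 1 \<inter> V)" using V by (simp add: compact_Int_closed closed_subspace)
    then obtain l s where ls: "l \<in> sphere 0 1 \<inter> V" "strict_mono s" "(u \<circ> s) \<longlonglongrightarrow> l"
      using compact_imp_seq_compact seq_compactE uS by metis
    have "\<exists>a\<in>subdiff F xs. \<exists>b\<in>subdiff F xs. (a - b) \<bullet> l \<noteq> 0"
    proof (rule ccontr)
      assume "\<not> ?thesis"
      then have "w \<bullet> l = 0" if "w \<in> {a - b |a b. a \<in> subdiff F xs \<and> b \<in> subdiff F xs}" for w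
        using that by blast
      then have "l \<bullet> l = 0" using orth_span[of _ l l] ls(1) unfolding V_def Lin_def by blast
      then show False using ls(1) by simp
    qed
    then obtain a0 b0 where ab0: "a0 \<in> subdiff F xs" "b0 \<in> subdiff F xs" "(a0 - b0) \<bullet> l \<noteq> 0" by blast
    define q where "q k = y (r (s k))" for k
    have qM: "\<forall>k. q k \<in> M" unfolding q_def using r(2) unfolding Q_def by blast
    have rs: "strict_mono (r \<circ> s)" using r(1) ls(2) by (rule strict_mono_o)
    have qlim: "q \<longlonglongrightarrow> xs" using LIMSEQ_subseq_LIMSEQ[OF ylim rs] unfolding q_def by (simp add: o_def)
    obtain ha where ha: "\<forall>\<^sub>F k in sequentially. ha k \<in> subdiff F (q k)" "ha \<longlonglongrightarrow> a0"
      using cont qM qlim ab0(1) unfolding subdiff_continuous_rel_def by blast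
    obtain hb where hb: "\<forall>\<^sub>F k in sequentially. hb k \<in> subdiff F (q k)" "hb \<longlonglongrightarrow> b0"
      using cont qM qlim ab0(2) unfolding subdiff_continuous_rel_def by blast
    have ulim: "(\<lambda>k. u (s k)) \<longlonglongrightarrow> l" using ls(3) by (simp add: o_def)
    have lim: "(\<lambda>k. (ha k - hb k) \<bullet> u (s k)) \<longlonglongrightarrow> (a0 - b0) \<bullet> l"
      by (intro tendsto_intros ha(2) hb(2) ulim)
    have ev0: "\<forall>\<^sub>F k in sequentially. (ha k - hb k) \<bullet> u (s k) = 0"
    proof (rule eventually_mono[OF eventually_conj[OF ha(1) hb(1)]])
      fix k assume "ha k \<in> subdiff F (q k) \<and> hb k \<in> subdiff F (q k)"
      then have "ha k - hb k \<in> Lin (subdiff F (q k))" unfolding Lin_def by (intro span_base) blast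
      moreover have "u (s k) \<in> Tsp F (q k)" using uT[of "s k"] unfolding q_def .
      ultimately show "(ha k - hb k) \<bullet> u (s k) = 0"
        unfolding Tsp_def orthogonal_comp_def orthogonal_def by blast
    qed
    have ev0': "\<forall>\<^sub>F k in sequentially. 0 = (ha k - hb k) \<bullet> u (s k)"
      using ev0 by (rule eventually_mono) simp
    have "(\<lambda>k. (ha k - hb k) \<bullet> u (s k)) \<longlonglongrightarrow> 0"
      by (rule Lim_transform_eventually[OF tendsto_const ev0'])
    with lim have "(a0 - b0) \<bullet> l = 0" using LIMSEQ_unique by blast
    with ab0(3) show False by simp
  qed
  show ?thesis using eventually_conj[OF evA evB] unfolding T_def by (rule eventually_mono) blast
qed

theorem theorem3p1:
  fixes J G :: "'a::euclidean_space \<Rightarrow> ereal"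
    and \<gamma> :: real and lam :: "nat \<Rightarrow> real"
    and z x v :: "nat \<Rightarrow> 'a"
  assumes J: "Gamma0 J" and G: "Gamma0 G"
    and ri: "rel_interior (edom J) \<inter> rel_interior (edom G) \<noteq> {}"
    and minex: "\<exists>m. \<forall>y. J m + G m \<le> J y + G y"
    and gamma: "\<gamma> > 0"
    and lam: "\<And>k. lam k \<in> {0<..2}"
    and lamsum: "filterlim (\<lambda>n. \<Sum>k<n. lam k * (2 - lam k)) at_top sequentially"
    and x_def: "\<And>k. x k = prox \<gamma> J (z k)"
    and v_def: "\<And>k. v (Suc k) = prox \<gamma> G (2 *\<^sub>R x k - z k)"
    and z_def: "\<And>k. z (Suc k) = (1 - lam k) *\<^sub>R z k + lam k *\<^sub>R (z k + v (Suc k) - x k)"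
  shows "\<exists>zs xs.
     z \<longlonglongrightarrow> zs \<and> x \<longlonglongrightarrow> xs \<and> v \<longlonglongrightarrow> xs \<and>
     (1/2) *\<^sub>R (rprox \<gamma> G (rprox \<gamma> J zs) + zs) = zs \<and>
     (\<forall>y. J xs + G xs \<le> J y + G y) \<and>
     (\<forall>MJ MG. partly_smooth J xs MJ \<and> partly_smooth G xs MG \<and>
        zs \<in> (\<lambda>u. xs + \<gamma> *\<^sub>R u) ` (rel_interior (subdiff J xs) \<inter> rel_interior (uminus ` subdiff G xs))
      \<longrightarrow>
        (\<forall>\<^sub>F k in sequentially. x k \<in> MJ \<and> v k \<in> MG) \<and>
        (MG = (+) xs ` Tsp G xs \<longrightarrow>
           (\<forall>\<^sub>F k in sequentially. v k \<in> (+) xs ` Tsp G xs \<and> Tsp G (v k) = Tsp G xs)) \<and>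
        (MJ = (+) xs ` Tsp J xs \<longrightarrow>
           (\<forall>\<^sub>F k in sequentially. x k \<in> (+) xs ` Tsp J xs \<and> Tsp J (x k) = Tsp J xs)))"
proof -
  obtain m where m: "\<forall>y. J m + G m \<le> J y + G y" using minex by blast
  obtain a where a: "a \<in> subdiff J m" "- a \<in> subdiff G m" using sum_rule_min[OF J G ri m] by blast
  define R where "R w = rprox \<gamma> G (rprox \<gamma> J w)" for w
  define z0 where "z0 = m + \<gamma> *\<^sub>R a"
  have pJ0: "prox \<gamma> J z0 = m"
    by (rule prox_unique[OF J gamma]) (use a(1) gamma in \<open>simp add: z0_def\<close>)
  have rJ0: "rprox \<gamma> J z0 = m - \<gamma> *\<^sub>R a" unfolding rprox_def pJ0 by (simp add: z0_def algebra_simps scaleR_2)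
  have pG0: "prox \<gamma> G (m - \<gamma> *\<^sub>R a) = m"
    by (rule prox_unique[OF G gamma]) (use a(2) gamma in simp)
  have R0: "R z0 = z0" unfolding R_def rJ0 unfolding rprox_def pG0 by (simp add: z0_def algebra_simps scaleR_2)
  have ne: "norm (R p - R q) \<le> norm (p - q)" for p q
    unfolding R_def using rprox_nonexp[OF G gamma] rprox_nonexp[OF J gamma] by (meson order_trans)
  define mu where "mu k = lam k / 2" for k
  have mu: "0 < mu k" "mu k \<le> 1" for k using lam[of k] unfolding mu_def by auto
  have musum: "filterlim (\<lambda>n. \<Sum>k<n. mu k * (1 - mu k)) at_top sequentially"
  proof -
    have "filterlim (\<lambda>n. (1/4) * (\<Sum>k<n. lam k * (2 - lam k))) at_top sequentially"
      by (rule filterlim_tendsto_pos_mult_at_top[OF tendsto_const _ lamsum]) simp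
    moreover have "(\<lambda>n. (1/4) * (\<Sum>k<n. lam k * (2 - lam k))) = (\<lambda>n. \<Sum>k<n. mu k * (1 - mu k))"
      unfolding mu_def by (rule ext) (simp add: sum_distrib_left algebra_simps)
    ultimately show ?thesis by simp
  qed
  have it: "z (Suc k) = z k + mu k *\<^sub>R (R (z k) - z k)" for k
  proof -
    have Rz: "R (z k) = 2 *\<^sub>R v (Suc k) - (2 *\<^sub>R x k - z k)"
      unfolding R_def rprox_def x_def[symmetric] v_def[symmetric] by simp
    have e1: "R (z k) - z k = 2 *\<^sub>R (v (Suc k) - x k)" unfolding Rz by (simp add: algebra_simps)
    have "mu k *\<^sub>R (R (z k) - z k) = lam k *\<^sub>R (v (Suc k) - x k)" unfolding e1 mu_def by simp
    then show ?thesis unfolding z_def by (simp add: algebra_simps)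
  qed
  obtain zs where zs: "z \<longlonglongrightarrow> zs" "R zs = zs" using KM[OF ne R0 mu musum it] by blast
  define xs where "xs = prox \<gamma> J zs"
  have xlim: "x \<longlonglongrightarrow> xs"
  proof -
    have "(\<lambda>k. z k - zs) \<longlonglongrightarrow> 0" using zs(1) by (rule LIM_zero)
    then have n0: "(\<lambda>k. norm (z k - zs)) \<longlonglongrightarrow> 0" by (rule tendsto_norm_zero)
    have "(\<lambda>k. x k - xs) \<longlonglongrightarrow> 0"
      by (rule Lim_null_comparison[OF _ n0]) (simp add: x_def xs_def prox_nonexp[OF J gamma])
    then show ?thesis by (rule LIM_zero_cancel)
  qed
  define vs where "vs = prox \<gamma> G (2 *\<^sub>R xs - zs)"
  have "R zs = 2 *\<^sub>R vs - (2 *\<^sub>R xs - zs)" unfolding R_def rprox_def xs_def vs_def by simp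
  then have vsx: "vs = xs" using zs(2) by (simp add: algebra_simps)
  have vlim: "v \<longlonglongrightarrow> xs"
  proof -
    have "(\<lambda>k. (2 *\<^sub>R x k - z k) - (2 *\<^sub>R xs - zs)) \<longlonglongrightarrow> 0"
      using xlim zs(1) by (intro LIM_zero tendsto_intros)
    then have n0: "(\<lambda>k. norm ((2 *\<^sub>R x k - z k) - (2 *\<^sub>R xs - zs))) \<longlonglongrightarrow> 0" by (rule tendsto_norm_zero)
    have "(\<lambda>k. v (Suc k) - vs) \<longlonglongrightarrow> 0"
      by (rule Lim_null_comparison[OF _ n0]) (simp add: v_def vs_def prox_nonexp[OF G gamma])
    then have "(\<lambda>k. v (Suc k)) \<longlonglongrightarrow> xs" using vsx by (simp add: LIM_zero_cancel)
    then show ?thesis by (simp add: filterlim_sequentially_Suc)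
  qed
  define u0 where "u0 = (1 / \<gamma>) *\<^sub>R (zs - xs)"
  have gJ: "u0 \<in> subdiff J xs" unfolding u0_def xs_def by (rule prox_sub[OF J gamma])
  have gG: "- u0 \<in> subdiff G xs"
  proof -
    have A: "(1 / \<gamma>) *\<^sub>R ((2 *\<^sub>R xs - zs) - vs) \<in> subdiff G vs" unfolding vs_def by (rule prox_sub[OF G gamma])
    have e2: "(2 *\<^sub>R xs - zs) - vs = - (zs - xs)" unfolding vsx by (simp add: scaleR_2 algebra_simps)
    have B: "(1 / \<gamma>) *\<^sub>R ((2 *\<^sub>R xs - zs) - vs) = - u0" unfolding e2 u0_def by (simp add: algebra_simps)
    from A have "- u0 \<in> subdiff G vs" unfolding B .
    then show ?thesis unfolding vsx .
  qed
  have minim: "J xs + G xs \<le> J y + G y" for y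
  proof -
    have fJ: "J xs = ereal (real_of_ereal (J xs))" and fG: "G xs = ereal (real_of_ereal (G xs))"
      using subdiffD(1)[OF J gJ] subdiffD(1)[OF G gG] by auto
    show ?thesis
    proof (cases "J y < \<infinity> \<and> G y < \<infinity>")
      case True
      obtain jy gy where jg: "J y = ereal jy" "G y = ereal gy"
        using True G0_nminf[OF J, of y] G0_nminf[OF G, of y] by (cases "J y"; cases "G y") auto
      obtain jx gx where jgx: "J xs = ereal jx" "G xs = ereal gx" using fJ fG by blast
      have "real_of_ereal (J xs) + u0 \<bullet> (y - xs) \<le> real_of_ereal (J y)" by (rule subdiff_fin[OF J gJ]) (use True in blast)
      then have i1: "jx + u0 \<bullet> (y - xs) \<le> jy" using jg jgx by simp
      have "real_of_ereal (G xs) + (- u0) \<bullet> (y - xs) \<le> real_of_ereal (G y)" by (rule subdiff_fin[OF G gG]) (use True in blast)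
      then have i2: "gx - u0 \<bullet> (y - xs) \<le> gy" using jg jgx by simp
      have "jx + gx \<le> jy + gy" using i1 i2 by linarith
      then show ?thesis using jg jgx by simp
    next
      case False
      then have "J y = \<infinity> \<or> G y = \<infinity>" by (auto simp: less_top[symmetric])
      then have inf: "J y + G y = \<infinity>" using G0_nminf[OF J, of y] G0_nminf[OF G, of y] by (cases "J y"; cases "G y") auto
      show ?thesis by (subst inf) simp
    qed
  qed
  have fixR: "(1/2) *\<^sub>R (rprox \<gamma> G (rprox \<gamma> J zs) + zs) = zs"
    using zs(2) unfolding R_def by (simp add: scaleR_2[symmetric] algebra_simps)
  have PS: "(\<forall>\<^sub>F k in sequentially. x k \<in> MJ \<and> v k \<in> MG) \<and>
        (MG = (+) xs ` Tsp G xs \<longrightarrow>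
           (\<forall>\<^sub>F k in sequentially. v k \<in> (+) xs ` Tsp G xs \<and> Tsp G (v k) = Tsp G xs)) \<and>
        (MJ = (+) xs ` Tsp J xs \<longrightarrow>
           (\<forall>\<^sub>F k in sequentially. x k \<in> (+) xs ` Tsp J xs \<and> Tsp J (x k) = Tsp J xs))"
    if psJ: "partly_smooth J xs MJ" and psG: "partly_smooth G xs MG"
      and nd: "zs \<in> (\<lambda>u. xs + \<gamma> *\<^sub>R u) ` (rel_interior (subdiff J xs) \<inter> rel_interior (uminus ` subdiff G xs))"
    for MJ MG
  proof -
    obtain u1 where u1: "zs = xs + \<gamma> *\<^sub>R u1" "u1 \<in> rel_interior (subdiff J xs)" "u1 \<in> rel_interior (uminus ` subdiff G xs)"
      using nd by blast
    have u1u0: "u1 = u0" unfolding u0_def u1(1) using gamma by simp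
    have "rel_interior (uminus ` subdiff G xs) = uminus ` rel_interior (subdiff G xs)"
      by (rule rel_interior_injective_linear_image) (auto intro: bounded_linear_minus[OF bounded_linear_ident] simp: inj_def)
    then have riG: "- u0 \<in> rel_interior (subdiff G xs)" using u1(3) u1u0 by force
    have riJ: "u0 \<in> rel_interior (subdiff J xs)" using u1(2) u1u0 by simp
    have evJ: "\<forall>\<^sub>F k in sequentially. x k \<in> MJ"
    proof (rule ident[OF J psJ riJ xlim])
      show "(\<lambda>k. (1 / \<gamma>) *\<^sub>R (z k - x k)) \<longlonglongrightarrow> u0" unfolding u0_def by (intro tendsto_intros zs(1) xlim)
      show "\<forall>\<^sub>F k in sequentially. (1 / \<gamma>) *\<^sub>R (z k - x k) \<in> subdiff J (x k)"
        unfolding x_def by (intro always_eventually allI prox_sub[OF J gamma])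
    qed
    have vSlim: "(\<lambda>k. v (Suc k)) \<longlonglongrightarrow> xs" using vlim by (simp add: filterlim_sequentially_Suc)
    have evG: "\<forall>\<^sub>F k in sequentially. v (Suc k) \<in> MG"
    proof (rule ident[OF G psG riG vSlim])
      have L: "(\<lambda>k. (1 / \<gamma>) *\<^sub>R ((2 *\<^sub>R x k - z k) - v (Suc k))) \<longlonglongrightarrow> (1 / \<gamma>) *\<^sub>R ((2 *\<^sub>R xs - zs) - xs)"
        by (intro tendsto_intros zs(1) xlim vSlim)
      have e3: "(2 *\<^sub>R xs - zs) - xs = - (zs - xs)" by (simp add: scaleR_2 algebra_simps)
      have B: "(1 / \<gamma>) *\<^sub>R ((2 *\<^sub>R xs - zs) - xs) = - u0" unfolding e3 u0_def by (simp add: algebra_simps)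
      from L show "(\<lambda>k. (1 / \<gamma>) *\<^sub>R ((2 *\<^sub>R x k - z k) - v (Suc k))) \<longlonglongrightarrow> - u0" unfolding B .
      show "\<forall>\<^sub>F k in sequentially. (1 / \<gamma>) *\<^sub>R ((2 *\<^sub>R x k - z k) - v (Suc k)) \<in> subdiff G (v (Suc k))"
        unfolding v_def by (intro always_eventually allI prox_sub[OF G gamma])
    qed
    then have evG': "\<forall>\<^sub>F k in sequentially. v k \<in> MG" by (rule eventually_sequentially_Suc[of "\<lambda>k. v k \<in> MG", THEN iffD1])
    have P1: "\<forall>\<^sub>F k in sequentially. x k \<in> MJ \<and> v k \<in> MG" using evJ evG' by (rule eventually_conj)
    have P2: "\<forall>\<^sub>F k in sequentially. v k \<in> (+) xs ` Tsp G xs \<and> Tsp G (v k) = Tsp G xs"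
      if MG: "MG = (+) xs ` Tsp G xs"
    proof -
      have "\<forall>\<^sub>F k in sequentially. Tsp G (v k) = Tsp G xs" by (rule tang[OF G psG MG vlim evG'])
      then show ?thesis using evG' MG by (simp add: eventually_conj)
    qed
    have P3: "\<forall>\<^sub>F k in sequentially. x k \<in> (+) xs ` Tsp J xs \<and> Tsp J (x k) = Tsp J xs"
      if MJ: "MJ = (+) xs ` Tsp J xs"
    proof -
      have "\<forall>\<^sub>F k in sequentially. Tsp J (x k) = Tsp J xs" by (rule tang[OF J psJ MJ xlim evJ])
      then show ?thesis using evJ MJ by (simp add: eventually_conj)
    qed
    show ?thesis using P1 P2 P3 by blast
  qed
  show ?thesis
    apply (rule exI[of _ zs], rule exI[of _ xs])
    using zs(1) xlim vlim fixR minim PS by blast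
qed

end
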